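(* For $n\geq 1$ and $m\geq 2$, the forcing spectrum $\mathrm{Spec}(T(2n+1,2m))$ is an integer interval (i.e. it is continuous).
   Context: $T(2n+1,2m)$ is the graph with vertices $(u_i,v_j)$, $i\in\mathbb{Z}_{2m}$, $j\in\mathbb{Z}_{2n+1}$, where $(u_i,v_j)$ is adjacent to $(u_{i+1},v_j)$ and to $(u_i,v_{j+1})$. For a perfect matching $M$ of a graph $G$, a subset $S\subseteq M$ is a forcing set of $M$ if no other perfect matching of $G$ contains $S$; the forcing number $f(G,M)$ is the minimum size of a forcing set. The forcing spectrum $\mathrm{Spec}(G)$ is the set $\{f(G,M): M \text{ a perfect matching of } G\}$; it is called continuous if it is a set of consecutive integers. *)

theory Defs
  imports Main
begin

definition perfect_matching :: "'a set \<Rightarrow> 'a set set \<Rightarrow> 'a set set \<Rightarrow> bool" where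
  "perfect_matching V E M \<longleftrightarrow> M \<subseteq> E \<and> (\<forall>v\<in>V. \<exists>!e. e \<in> M \<and> v \<in> e)"

definition forcing_set :: "'a set \<Rightarrow> 'a set set \<Rightarrow> 'a set set \<Rightarrow> 'a set set \<Rightarrow> bool" where
  "forcing_set V E M S \<longleftrightarrow> S \<subseteq> M \<and>
     (\<forall>M'. perfect_matching V E M' \<and> S \<subseteq> M' \<longrightarrow> M' = M)"

definition forcing_number :: "'a set \<Rightarrow> 'a set set \<Rightarrow> 'a set set \<Rightarrow> nat" where
  "forcing_number V E M = (LEAST k. \<exists>S. forcing_set V E M S \<and> card S = k)"

definition forcing_spectrum :: "'a set \<Rightarrow> 'a set set \<Rightarrow> nat set" where
  "forcing_spectrum V E = {forcing_number V E M | M. perfect_matching V E M}"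

definition continuous_set :: "nat set \<Rightarrow> bool" where
  "continuous_set A \<longleftrightarrow> (\<forall>x\<in>A. \<forall>y\<in>A. \<forall>k. x \<le> k \<and> k \<le> y \<longrightarrow> k \<in> A)"

definition torus_V :: "nat \<Rightarrow> nat \<Rightarrow> (nat \<times> nat) set" where
  "torus_V n m = {0..<2*m} \<times> {0..<2*n+1}"

definition torus_E :: "nat \<Rightarrow> nat \<Rightarrow> (nat \<times> nat) set set" where
  "torus_E n m =
     {{(i,j), ((i+1) mod (2*m), j)} | i j. i < 2*m \<and> j < 2*n+1} \<union>
     {{(i,j), (i, (j+1) mod (2*n+1))} | i j. i < 2*m \<and> j < 2*n+1}"

end

theory Submission
  imports Defs
begin

lemma pm_iff: "perfect_matching V E M \<longleftrightarrow> M \<subseteq> E \<and> (\<forall>v\<in>V. \<exists>e\<in>M. v \<in> e) \<and>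
   (\<forall>v\<in>V. \<forall>e\<in>M. \<forall>e'\<in>M. v \<in> e \<longrightarrow> v \<in> e' \<longrightarrow> e = e')"
  unfolding perfect_matching_def by blast

definition EV :: "'a set \<Rightarrow> 'a set set \<Rightarrow> bool" where
  "EV V E \<longleftrightarrow> finite E \<and> (\<forall>e\<in>E. e \<subseteq> V \<and> e \<noteq> {})"

lemma pm_self_forcing:
  assumes pm: "perfect_matching V E M" and ev: "EV V E"
  shows "forcing_set V E M M"
  unfolding forcing_set_def
proof (intro conjI allI impI)
  fix N assume N: "perfect_matching V E N \<and> M \<subseteq> N"
  have "N \<subseteq> M"
  proof
    fix e assume e: "e \<in> N"
    then have "e \<in> E" using N unfolding pm_iff by blast
    then obtain v where v: "v \<in> e" "v \<in> V" using ev unfolding EV_def by blast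
    then obtain e' where e': "e' \<in> M" "v \<in> e'" using pm unfolding pm_iff by blast
    then have "e' \<in> N" using N by blast
    then have "e = e'" using N e v e' unfolding pm_iff by blast
    then show "e \<in> M" using e' by simp
  qed
  then show "N = M" using N by blast
qed simp

lemma fn_ex:
  assumes pm: "perfect_matching V E M" and ev: "EV V E"
  shows "\<exists>S. forcing_set V E M S \<and> card S = forcing_number V E M"
proof -
  have "\<exists>k S. forcing_set V E M S \<and> card S = k" using pm_self_forcing[OF pm ev] by blast
  then have "\<exists>S. forcing_set V E M S \<and> card S = (LEAST k. \<exists>S. forcing_set V E M S \<and> card S = k)"
    by (rule LeastI_ex)
  then show ?thesis unfolding forcing_number_def by blast
qed

lemma fn_le: "forcing_set V E M S \<Longrightarrow> forcing_number V E M \<le> card S"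
  unfolding forcing_number_def by (rule Least_le) blast

lemma fs_finite: "EV V E \<Longrightarrow> perfect_matching V E M \<Longrightarrow> forcing_set V E M S \<Longrightarrow> finite S"
  unfolding EV_def forcing_set_def pm_iff by (meson finite_subset subset_trans)

lemma twist_fn:
  assumes pm: "perfect_matching V E M" and pm': "perfect_matching V E M'" and ev: "EV V E"
    and ab: "a \<in> M" "b \<in> M" and M': "M' = (M - {a,b}) \<union> {c,d}"
    and un: "a \<union> b = c \<union> d" and dab: "a \<inter> b = {}" and dcd: "c \<inter> d = {}"
    and abE: "a \<in> E" "b \<in> E"
    and ac: "a \<inter> c \<noteq> {}" and bc: "b \<inter> c \<noteq> {}" and ad: "a \<inter> d \<noteq> {}"
    and ne: "a \<noteq> c" "a \<noteq> d" "b \<noteq> c" "b \<noteq> d"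
  shows "forcing_number V E M' \<le> forcing_number V E M + 1"
proof -
  obtain S where S: "forcing_set V E M S" "card S = forcing_number V E M"
    using fn_ex[OF pm ev] by blast
  have finS: "finite S" using fs_finite[OF ev pm S(1)] .
  have SM: "S \<subseteq> M" using S(1) unfolding forcing_set_def by blast
  have EsubV: "\<And>e. e \<in> E \<Longrightarrow> e \<subseteq> V" using ev unfolding EV_def by blast
  have cM: "c \<notin> M"
  proof
    assume "c \<in> M"
    from ac obtain v where "v \<in> a" "v \<in> c" by blast
    moreover have "v \<in> V" using EsubV[OF abE(1)] \<open>v \<in> a\<close> by blast
    ultimately have "a = c" using pm ab \<open>c \<in> M\<close> unfolding pm_iff by blast
    then show False using ne by simp
  qed
  have dM: "d \<notin> M"
  proof
    assume "d \<in> M"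
    from ad obtain v where "v \<in> a" "v \<in> d" by blast
    moreover have "v \<in> V" using EsubV[OF abE(1)] \<open>v \<in> a\<close> by blast
    ultimately have "a = d" using pm ab \<open>d \<in> M\<close> unfolding pm_iff by blast
    then show False using ne by simp
  qed
  have Sab: "a \<in> S \<or> b \<in> S"
  proof (rule ccontr)
    assume "\<not> (a \<in> S \<or> b \<in> S)"
    then have "S \<subseteq> M'" using SM M' by blast
    then have "M' = M" using S(1) pm' unfolding forcing_set_def by blast
    moreover have "a \<notin> M'" using M' ne by blast
    ultimately show False using ab by blast
  qed
  define S' where "S' = (S - {a,b}) \<union> {c,d}"
  have fs': "forcing_set V E M' S'"
    unfolding forcing_set_def
  proof (intro conjI allI impI)
    show "S' \<subseteq> M'" using SM M' unfolding S'_def by blast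
    fix N assume N: "perfect_matching V E N \<and> S' \<subseteq> N"
    have cN: "c \<in> N" "d \<in> N" using N unfolding S'_def by auto
    have NE: "N \<subseteq> E" using N unfolding pm_iff by blast
    have Nu: "\<And>v e e'. v \<in> V \<Longrightarrow> e \<in> N \<Longrightarrow> e' \<in> N \<Longrightarrow> v \<in> e \<Longrightarrow> v \<in> e' \<Longrightarrow> e = e'"
      using N unfolding pm_iff by blast
    have Nx: "\<And>v. v \<in> V \<Longrightarrow> \<exists>e\<in>N. v \<in> e" using N unfolding pm_iff by blast
    have aV: "a \<subseteq> V" "b \<subseteq> V" using EsubV abE by auto
    define N' where "N' = (N - {c,d}) \<union> {a,b}"
    have pmN': "perfect_matching V E N'"
      unfolding pm_iff
    proof (intro conjI ballI impI)
      show "N' \<subseteq> E" using NE abE unfolding N'_def by blast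
    next
      fix v assume v: "v \<in> V"
      show "\<exists>e\<in>N'. v \<in> e"
      proof (cases "v \<in> a \<union> b")
        case True then show ?thesis unfolding N'_def by blast
      next
        case False
        then obtain e where "e \<in> N" "v \<in> e" using Nx[OF v] by blast
        moreover have "e \<noteq> c" "e \<noteq> d" using False un \<open>v \<in> e\<close> by blast+
        ultimately show ?thesis unfolding N'_def by blast
      qed
    next
      fix v e e' assume v: "v \<in> V" and e: "e \<in> N'" "e' \<in> N'" and ve: "v \<in> e" "v \<in> e'"
      show "e = e'"
      proof (cases "v \<in> a \<union> b")
        case True
        then have "v \<in> c \<union> d" using un by blast
        then obtain f where f: "f \<in> {c,d}" "v \<in> f" by blast
        have "f \<in> N" using f cN by blast
        have "\<And>g. g \<in> N' \<Longrightarrow> v \<in> g \<Longrightarrow> g \<in> {a,b}"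
        proof -
          fix g assume "g \<in> N'" "v \<in> g"
          show "g \<in> {a,b}"
          proof (rule ccontr)
            assume "g \<notin> {a,b}"
            then have "g \<in> N" "g \<notin> {c,d}" using \<open>g \<in> N'\<close> unfolding N'_def by blast+
            then show False using Nu[OF v \<open>g \<in> N\<close> \<open>f \<in> N\<close> \<open>v \<in> g\<close> f(2)] f(1) by blast
          qed
        qed
        then have "e \<in> {a,b}" "e' \<in> {a,b}" using e ve by blast+
        then show ?thesis using dab ve by blast
      next
        case False
        then have "e \<notin> {a,b}" "e' \<notin> {a,b}" using ve by blast+
        then have "e \<in> N" "e' \<in> N" using e unfolding N'_def by blast+
        then show ?thesis using Nu v ve by blast
      qed
    qed
    have "S \<subseteq> N'"
    proof
      fix s assume "s \<in> S"
      show "s \<in> N'"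
      proof (cases "s \<in> {a,b}")
        case True then show ?thesis unfolding N'_def by blast
      next
        case False
        then have "s \<in> N" using N \<open>s \<in> S\<close> unfolding S'_def by blast
        moreover have "s \<noteq> c" "s \<noteq> d" using \<open>s \<in> S\<close> SM cM dM by blast+
        ultimately show ?thesis unfolding N'_def by blast
      qed
    qed
    then have N'M: "N' = M" using S(1) pmN' unfolding forcing_set_def by blast
    have aN: "a \<notin> N"
    proof
      assume "a \<in> N"
      from ac obtain v where "v \<in> a" "v \<in> c" by blast
      then have "a = c" using Nu[OF _ \<open>a \<in> N\<close> cN(1)] aV by blast
      then show False using ne by simp
    qed
    have bN: "b \<notin> N"
    proof
      assume "b \<in> N"
      from bc obtain v where "v \<in> b" "v \<in> c" by blast
      then have "b = c" using Nu[OF _ \<open>b \<in> N\<close> cN(1)] aV by blast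
      then show False using ne by simp
    qed
    have "N = (N' - {a,b}) \<union> {c,d}" unfolding N'_def using aN bN cN by blast
    then show "N = M'" using N'M M' by simp
  qed
  have c2: "card {c,d} \<le> 2" by (simp add: card_insert_if)
  have "card S' \<le> card (S - {a,b}) + 2"
    unfolding S'_def using card_Un_le[of "S - {a,b}" "{c,d}"] c2 by linarith
  moreover have "card (S - {a,b}) + 1 \<le> card S"
  proof -
    have "S - {a,b} \<subset> S" using Sab by blast
    then have "card (S - {a,b}) < card S" using finS by (rule psubset_card_mono[rotated])
    then show ?thesis by simp
  qed
  ultimately have "card S' \<le> card S + 1" by simp
  then show ?thesis using fn_le[OF fs'] S(2) by simp
qed


lemma ivt_path:
  assumes "R\<^sup>*\<^sup>* s t" and step: "\<And>x y. R x y \<Longrightarrow> F y \<le> F x + 1"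
    and "F s \<le> k" "k \<le> F t"
  shows "\<exists>u. R\<^sup>*\<^sup>* s u \<and> F u = (k::nat)"
  using assms(1,4)
proof (induction rule: rtranclp_induct)
  case base then show ?case using assms(3) by auto
next
  case (step y z)
  show ?case
  proof (cases "k \<le> F y")
    case True then show ?thesis using step by auto
  next
    case False
    then have "F z = k" using step.prems step.hyps(2) assms(2)[of y z] by linarith
    then show ?thesis using step.hyps(1,2) rtranclp.rtrancl_into_rtrancl by fastforce
  qed
qed

definition img :: "('a \<Rightarrow> 'a) \<Rightarrow> 'a set set \<Rightarrow> 'a set set" where
  "img f X = (\<lambda>e. f ` e) ` X"

lemma img_pm:
  assumes pm: "perfect_matching V E M" and ev: "EV V E"
    and sV: "\<forall>v\<in>V. s v \<in> V" and tV: "\<forall>v\<in>V. t v \<in> V"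
    and ts: "\<forall>v\<in>V. t (s v) = v" and st: "\<forall>v\<in>V. s (t v) = v"
    and sE: "\<forall>e\<in>E. s ` e \<in> E"
  shows "perfect_matching V E (img s M)"
  unfolding pm_iff
proof (intro conjI ballI impI)
  have ME: "M \<subseteq> E" using pm unfolding pm_iff by blast
  then show "img s M \<subseteq> E" using sE unfolding img_def by blast
next
  fix v assume v: "v \<in> V"
  then obtain e where "e \<in> M" "t v \<in> e" using pm tV unfolding pm_iff by blast
  then have "s (t v) \<in> s ` e" by blast
  then have "v \<in> s ` e" using st v by simp
  then show "\<exists>e\<in>img s M. v \<in> e" using \<open>e \<in> M\<close> unfolding img_def by blast
next
  fix v e e' assume v: "v \<in> V" and e: "e \<in> img s M" "e' \<in> img s M" and ve: "v \<in> e" "v \<in> e'"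
  obtain f f' where f: "f \<in> M" "e = s ` f" "f' \<in> M" "e' = s ` f'" using e unfolding img_def by blast
  have ME: "M \<subseteq> E" using pm unfolding pm_iff by blast
  have fV: "f \<subseteq> V" "f' \<subseteq> V" using f(1,3) ME ev unfolding EV_def by blast+
  obtain u u' where u: "u \<in> f" "v = s u" "u' \<in> f'" "v = s u'" using f ve by blast
  have "u \<in> V" "u' \<in> V" using u fV by blast+
  then have "t (s u) = t (s u')" using u by simp
  then have "u = u'" using ts \<open>u \<in> V\<close> \<open>u' \<in> V\<close> by simp
  then have "f = f'" using pm u f(1,3) \<open>u \<in> V\<close> unfolding perfect_matching_def by blast
  then show "e = e'" using f by simp
qed

lemma img_fn:
  assumes pm: "perfect_matching V E M" and ev: "EV V E"
    and sV: "\<forall>v\<in>V. s v \<in> V" and tV: "\<forall>v\<in>V. t v \<in> V"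
    and ts: "\<forall>v\<in>V. t (s v) = v" and st: "\<forall>v\<in>V. s (t v) = v"
    and sE: "\<forall>e\<in>E. s ` e \<in> E" and tE: "\<forall>e\<in>E. t ` e \<in> E"
  shows "forcing_number V E (img s M) \<le> forcing_number V E M"
proof -
  obtain S where S: "forcing_set V E M S" "card S = forcing_number V E M"
    using fn_ex[OF pm ev] by blast
  have SM: "S \<subseteq> M" using S(1) unfolding forcing_set_def by blast
  have ME: "M \<subseteq> E" using pm unfolding pm_iff by blast
  have EV': "\<And>e. e \<in> E \<Longrightarrow> e \<subseteq> V" using ev unfolding EV_def by blast
  have tsimg: "\<And>e. e \<in> E \<Longrightarrow> t ` (s ` e) = e"
  proof -
    fix e assume "e \<in> E"
    then have "e \<subseteq> V" using EV' by blast
    then show "t ` (s ` e) = e" unfolding image_image using ts by (simp add: subset_iff cong: image_cong)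
  qed
  have stimg: "\<And>e. e \<in> E \<Longrightarrow> s ` (t ` e) = e"
  proof -
    fix e assume "e \<in> E"
    then have "e \<subseteq> V" using EV' by blast
    then show "s ` (t ` e) = e" unfolding image_image using st by (simp add: subset_iff cong: image_cong)
  qed
  have "forcing_set V E (img s M) (img s S)"
    unfolding forcing_set_def
  proof (intro conjI allI impI)
    show "img s S \<subseteq> img s M" using SM unfolding img_def by blast
    fix N assume N: "perfect_matching V E N \<and> img s S \<subseteq> N"
    have NE: "N \<subseteq> E" using N unfolding pm_iff by blast
    have pmN: "perfect_matching V E (img t N)"
      using img_pm[OF conjunct1[OF N] ev tV sV st ts tE] .
    have "S \<subseteq> img t N"
    proof
      fix e assume "e \<in> S"
      then have "s ` e \<in> N" using N unfolding img_def by blast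
      moreover have "e = t ` (s ` e)" using tsimg \<open>e \<in> S\<close> SM ME by blast
      ultimately show "e \<in> img t N" unfolding img_def by blast
    qed
    then have "img t N = M" using S(1) pmN unfolding forcing_set_def by blast
    then have "img s (img t N) = img s M" by simp
    moreover have "img s (img t N) = N"
    proof -
      have "img s (img t N) = (\<lambda>e. s ` (t ` e)) ` N" unfolding img_def by (rule image_image)
      also have "\<dots> = (\<lambda>e. e) ` N" using stimg NE by (intro image_cong) auto
      finally show ?thesis by simp
    qed
    ultimately show "N = img s M" by simp
  qed
  then have "forcing_number V E (img s M) \<le> card (img s S)" by (rule fn_le)
  also have "\<dots> \<le> card S" unfolding img_def by (rule card_image_le[OF fs_finite[OF ev pm S(1)]])
  finally show ?thesis using S(2) by simp
qed


datatype dir = U | D | Lt | Rt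

fun opp :: "dir \<Rightarrow> dir" where
  "opp U = D" | "opp D = U" | "opp Lt = Rt" | "opp Rt = Lt"

lemma opp_opp[simp]: "opp (opp d) = d" by (cases d) auto

locale tor =
  fixes n m :: nat
  assumes n1: "n \<ge> 1" and m2: "m \<ge> 2"
begin

definition R :: nat where "R = 2*m"
definition C :: nat where "C = 2*n+1"
abbreviation "V \<equiv> torus_V n m"
abbreviation "E \<equiv> torus_E n m"

lemma R4: "R \<ge> 4" using m2 by (simp add: R_def)
lemma C3: "C \<ge> 3" using n1 by (simp add: C_def)
lemma evenR: "even R" by (simp add: R_def)
lemma oddC: "odd C" by (simp add: C_def)

definition sh :: "nat \<Rightarrow> nat \<Rightarrow> nat" where "sh a k = (a + k) mod R"
definition cs :: "nat \<Rightarrow> nat \<Rightarrow> nat" where "cs j k = (j + k) mod C"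
definition up :: "nat \<Rightarrow> nat" where "up i = sh i 1"
definition dn :: "nat \<Rightarrow> nat" where "dn i = sh i (R - 1)"
definition rt :: "nat \<Rightarrow> nat" where "rt j = cs j 1"
definition lf :: "nat \<Rightarrow> nat" where "lf j = cs j (C - 1)"

fun nb :: "nat \<times> nat \<Rightarrow> dir \<Rightarrow> nat \<times> nat" where
  "nb (i,j) U = (up i, j)"
| "nb (i,j) D = (dn i, j)"
| "nb (i,j) Lt = (i, lf j)"
| "nb (i,j) Rt = (i, rt j)"

definition valid :: "(nat\<times>nat \<Rightarrow> dir) \<Rightarrow> bool" where
  "valid st \<longleftrightarrow> (\<forall>v\<in>V. st (nb v (st v)) = opp (st v)) \<and> (\<forall>v. v \<notin> V \<longrightarrow> st v = U)"

definition mof :: "(nat\<times>nat \<Rightarrow> dir) \<Rightarrow> (nat\<times>nat) set set" where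
  "mof st = {{v, nb v (st v)} | v. v \<in> V}"

lemma V_iff[simp]: "(i,j) \<in> V \<longleftrightarrow> i < R \<and> j < C"
  by (simp add: torus_V_def R_def C_def)

lemma sh_lt[simp]: "sh a k < R" unfolding sh_def using R4 by simp
lemma cs_lt[simp]: "cs a k < C" unfolding cs_def using C3 by simp
lemma up_lt[simp]: "up a < R" unfolding up_def by simp
lemma dn_lt[simp]: "dn a < R" unfolding dn_def by simp
lemma rt_lt[simp]: "rt a < C" unfolding rt_def by simp
lemma lf_lt[simp]: "lf a < C" unfolding lf_def by simp

lemma sh_sh: "sh (sh a k) l = sh a (k + l)"
  unfolding sh_def by (simp add: mod_add_left_eq add.assoc)
lemma cs_cs: "cs (cs a k) l = cs a (k + l)"
  unfolding cs_def by (simp add: mod_add_left_eq add.assoc)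
lemma sh_0[simp]: "a < R \<Longrightarrow> sh a 0 = a" unfolding sh_def by simp
lemma cs_0[simp]: "a < C \<Longrightarrow> cs a 0 = a" unfolding cs_def by simp
lemma sh_R: "a < R \<Longrightarrow> sh a R = a" unfolding sh_def by (metis mod_add_self2 mod_less)
lemma cs_C: "a < C \<Longrightarrow> cs a C = a" unfolding cs_def by (metis mod_add_self2 mod_less)
lemma sh_addR: "sh a (k + R) = sh a k" unfolding sh_def by (metis add.assoc mod_add_self2)
lemma cs_addC: "cs a (k + C) = cs a k" unfolding cs_def by (metis add.assoc mod_add_self2)
lemma sh_mod: "sh a (k mod R) = sh a k" unfolding sh_def by (simp add: mod_add_right_eq)

lemma mod_inj_aux: "k < (q::nat) \<Longrightarrow> l < q \<Longrightarrow> (a + k) mod q = (a + l) mod q \<Longrightarrow> k = l"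
proof (induction k l rule: linorder_wlog)
  case (le k l)
  then have "q dvd (a + l) - (a + k)" using mod_eq_dvd_iff_nat[of "a+k" "a+l" q] by simp
  then have "q dvd l - k" by simp
  moreover have "l - k < q" using le by simp
  ultimately have "l - k = 0" using dvd_imp_le by (metis gr0I leD)
  then show ?case using le by simp
next
  case (sym k l) then show ?case by metis
qed
lemma sh_inj: "k < R \<Longrightarrow> l < R \<Longrightarrow> sh a k = sh a l \<Longrightarrow> k = l"
  unfolding sh_def by (rule mod_inj_aux)
lemma cs_inj: "k < C \<Longrightarrow> l < C \<Longrightarrow> cs a k = cs a l \<Longrightarrow> k = l"
  unfolding cs_def by (rule mod_inj_aux)

lemma up_dn[simp]: "a < R \<Longrightarrow> up (dn a) = a"
  unfolding up_def dn_def using sh_R R4 sh_sh[of a "R-1" 1] by simp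
lemma dn_up[simp]: "a < R \<Longrightarrow> dn (up a) = a"
  unfolding up_def dn_def using sh_R R4 sh_sh[of a 1 "R-1"] by simp
lemma rt_lf[simp]: "a < C \<Longrightarrow> rt (lf a) = a"
  unfolding rt_def lf_def using cs_C C3 cs_cs[of a "C-1" 1] by simp
lemma lf_rt[simp]: "a < C \<Longrightarrow> lf (rt a) = a"
  unfolding rt_def lf_def using cs_C C3 cs_cs[of a 1 "C-1"] by simp

lemma up_sh: "up (sh a k) = sh a (Suc k)" unfolding up_def by (simp add: sh_sh)
lemma rt_cs: "rt (cs a k) = cs a (Suc k)" unfolding rt_def by (simp add: cs_cs)
lemma dn_sh: "dn (sh a (Suc k)) = sh a k"
proof -
  have "dn (sh a (Suc k)) = sh a (k + R)" unfolding dn_def using R4 by (simp add: sh_sh)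
  then show ?thesis by (simp add: sh_addR)
qed
lemma lf_cs: "lf (cs a (Suc k)) = cs a k"
proof -
  have "lf (cs a (Suc k)) = cs a (k + C)" unfolding lf_def using C3 by (simp add: cs_cs)
  then show ?thesis by (simp add: cs_addC)
qed

lemma sh_even: "even (sh a k) = even (a + k)"
proof -
  have "2 dvd R" using evenR by simp
  then have "(a + k) mod R mod 2 = (a + k) mod 2" by (rule mod_mod_cancel)
  then show ?thesis unfolding sh_def even_iff_mod_2_eq_zero by simp
qed

lemma up_ne[simp]: "a < R \<Longrightarrow> up a \<noteq> a"
  using sh_inj[of 1 0 a] R4 unfolding up_def by auto
lemma dn_ne[simp]: "a < R \<Longrightarrow> dn a \<noteq> a"
  using sh_inj[of "R-1" 0 a] R4 unfolding dn_def by auto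
lemma up_ne_dn[simp]: "up a \<noteq> dn a"
  using sh_inj[of 1 "R-1" a] R4 unfolding up_def dn_def by auto
lemma rt_ne[simp]: "a < C \<Longrightarrow> rt a \<noteq> a"
  using cs_inj[of 1 0 a] C3 unfolding rt_def by auto
lemma lf_ne[simp]: "a < C \<Longrightarrow> lf a \<noteq> a"
  using cs_inj[of "C-1" 0 a] C3 unfolding lf_def by auto
lemma rt_ne_lf[simp]: "rt a \<noteq> lf a"
  using cs_inj[of 1 "C-1" a] C3 unfolding rt_def lf_def by auto

lemma nb_V: "v \<in> V \<Longrightarrow> nb v d \<in> V"
  by (cases v; cases d) auto

lemma nb_nb[simp]: "v \<in> V \<Longrightarrow> nb (nb v d) (opp d) = v"
  by (cases v; cases d) auto

lemma nb_inj: "v \<in> V \<Longrightarrow> nb v d = nb v d' \<Longrightarrow> d = d'"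
  by (cases v; cases d; cases d') (auto dest: sym)

lemma nb_ne: "v \<in> V \<Longrightarrow> nb v d \<noteq> v"
  by (cases v; cases d) auto

lemma up_eq: "up i = (i + 1) mod (2*m)" unfolding up_def sh_def R_def by simp
lemma rt_eq: "rt j = (j + 1) mod (2*n+1)" unfolding rt_def cs_def C_def by simp

lemma E_alt: "E = {{(i,j), (up i, j)} | i j. i < R \<and> j < C} \<union> {{(i,j), (i, rt j)} | i j. i < R \<and> j < C}"
  unfolding torus_E_def up_eq rt_eq R_def C_def by simp

lemma edge_E: "v \<in> V \<Longrightarrow> {v, nb v d} \<in> E"
proof (cases v)
  case (Pair i j)
  assume v: "v \<in> V"
  then have ij: "i < R" "j < C" using Pair by auto
  show ?thesis
  proof (cases d)
    case U then show ?thesis using Pair ij unfolding E_alt by auto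
  next
    case D
    have "{v, nb v d} = {(dn i, j), (up (dn i), j)}" using Pair D ij by auto
    moreover have "dn i < R" "j < C" using ij by auto
    ultimately show ?thesis unfolding E_alt by blast
  next
    case Rt then show ?thesis using Pair ij unfolding E_alt by auto
  next
    case Lt
    have "{v, nb v d} = {(i, lf j), (i, rt (lf j))}" using Pair Lt ij by auto
    moreover have "i < R" "lf j < C" using ij by auto
    ultimately show ?thesis unfolding E_alt by blast
  qed
qed

lemma E_form: "e \<in> E \<Longrightarrow> \<exists>v\<in>V. \<exists>d. e = {v, nb v d}"
proof -
  assume "e \<in> E"
  then consider (a) i j where "e = {(i,j), (up i, j)}" "i < R" "j < C"
    | (b) i j where "e = {(i,j), (i, rt j)}" "i < R" "j < C"
    unfolding E_alt by blast
  then show ?thesis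
  proof cases
    case a then show ?thesis by (intro bexI[of _ "(i,j)"] exI[of _ U]) auto
  next
    case b then show ?thesis by (intro bexI[of _ "(i,j)"] exI[of _ Rt]) auto
  qed
qed

lemma E_sub: "e \<in> E \<Longrightarrow> e \<subseteq> V"
  using E_form nb_V by blast

lemma E_other: "e \<in> E \<Longrightarrow> w \<in> e \<Longrightarrow> \<exists>d. e = {w, nb w d}"
proof -
  assume e: "e \<in> E" and w: "w \<in> e"
  obtain v d where v: "v \<in> V" "e = {v, nb v d}" using E_form[OF e] by blast
  show ?thesis
  proof (cases "w = v")
    case True then show ?thesis using v by blast
  next
    case False
    then have "w = nb v d" using w v by blast
    then have "e = {w, nb w (opp d)}" using v by auto
    then show ?thesis by blast
  qed
qed

lemma finite_V: "finite V" unfolding torus_V_def by simp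

lemma finite_E: "finite E"
proof -
  have "E \<subseteq> Pow V" using E_sub by blast
  then show ?thesis using finite_V by (meson finite_Pow_iff finite_subset)
qed

lemma EV_tor: "EV V E"
  unfolding EV_def using finite_E E_sub E_form by blast

end

context tor begin

lemma partner: "valid st \<Longrightarrow> w \<in> V \<Longrightarrow> v = nb w (st w) \<Longrightarrow> nb v (st v) = w"
  unfolding valid_def by (metis nb_nb)

lemma valid_opp: "valid st \<Longrightarrow> v \<in> V \<Longrightarrow> st (nb v (st v)) = opp (st v)"
  unfolding valid_def by blast

lemma valid_out: "valid st \<Longrightarrow> v \<notin> V \<Longrightarrow> st v = U"
  unfolding valid_def by blast

lemma valid_pm: "valid st \<Longrightarrow> perfect_matching V E (mof st)"
  unfolding pm_iff
proof (intro conjI ballI impI)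
  assume vs: "valid st"
  show "mof st \<subseteq> E" unfolding mof_def using edge_E by blast
  fix v assume v: "v \<in> V"
  show "\<exists>e\<in>mof st. v \<in> e" using v unfolding mof_def by blast
  fix e e' assume e: "e \<in> mof st" "e' \<in> mof st" and ve: "v \<in> e" "v \<in> e'"
  have key: "\<And>f. f \<in> mof st \<Longrightarrow> v \<in> f \<Longrightarrow> f = {v, nb v (st v)}"
  proof -
    fix f assume f: "f \<in> mof st" "v \<in> f"
    then obtain w where w: "w \<in> V" "f = {w, nb w (st w)}" unfolding mof_def by blast
    show "f = {v, nb v (st v)}"
    proof (cases "v = w")
      case True then show ?thesis using w by simp
    next
      case False
      then have "v = nb w (st w)" using f w by blast
      then have "nb v (st v) = w" using partner[OF vs w(1)] by blast
      then show ?thesis using w \<open>v = nb w (st w)\<close> by (metis insert_commute)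
    qed
  qed
  show "e = e'" using key[OF e(1) ve(1)] key[OF e(2) ve(2)] by simp
qed

lemma pair_eq: "{w, x} = {w, y} \<Longrightarrow> x \<noteq> w \<Longrightarrow> x = y"
  by (metis doubleton_eq_iff)

lemma pm_state: "perfect_matching V E M \<Longrightarrow> \<exists>st. valid st \<and> mof st = M"
proof -
  assume pm: "perfect_matching V E M"
  have ME: "M \<subseteq> E" using pm unfolding pm_iff by blast
  have uq: "\<And>v e e'. v \<in> V \<Longrightarrow> e \<in> M \<Longrightarrow> e' \<in> M \<Longrightarrow> v \<in> e \<Longrightarrow> v \<in> e' \<Longrightarrow> e = e'"
    using pm unfolding pm_iff by blast
  have ex: "\<And>v. v \<in> V \<Longrightarrow> \<exists>d. {v, nb v d} \<in> M"
  proof -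
    fix v assume "v \<in> V"
    then obtain e where "e \<in> M" "v \<in> e" using pm unfolding pm_iff by blast
    then obtain d where "e = {v, nb v d}" using E_other ME by blast
    then show "\<exists>d. {v, nb v d} \<in> M" using \<open>e \<in> M\<close> by blast
  qed
  define st where "st v = (if v \<in> V then (SOME d. {v, nb v d} \<in> M) else U)" for v
  have stM: "\<And>v. v \<in> V \<Longrightarrow> {v, nb v (st v)} \<in> M"
  proof -
    fix v assume v: "v \<in> V"
    show "{v, nb v (st v)} \<in> M" unfolding st_def using someI_ex[OF ex[OF v]] v by simp
  qed
  have valid: "valid st"
    unfolding valid_def
  proof (intro conjI ballI allI impI)
    fix v assume v: "v \<in> V"
    let ?d = "st v"
    let ?w = "nb v ?d"
    have w: "?w \<in> V" using nb_V v by blast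
    have e1: "{?w, nb ?w (st ?w)} \<in> M" using stM w by blast
    have e2: "{?w, nb ?w (opp ?d)} \<in> M" using stM[OF v] v by (simp add: insert_commute)
    have "{?w, nb ?w (st ?w)} = {?w, nb ?w (opp ?d)}" using uq[OF w e1 e2] by blast
    moreover have "nb ?w (st ?w) \<noteq> ?w" using nb_ne w by blast
    ultimately have "nb ?w (st ?w) = nb ?w (opp ?d)" by (rule pair_eq)
    then show "st ?w = opp ?d" using nb_inj w by blast
  next
    fix v assume "v \<notin> V" then show "st v = U" unfolding st_def by simp
  qed
  have "mof st = M"
  proof
    show "mof st \<subseteq> M" unfolding mof_def using stM by blast
    show "M \<subseteq> mof st"
    proof
      fix e assume e: "e \<in> M"
      then obtain v d where vd: "v \<in> V" "e = {v, nb v d}" using E_form ME by blast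
      then have "e = {v, nb v (st v)}" using uq[OF vd(1) e stM[OF vd(1)]] by blast
      then show "e \<in> mof st" unfolding mof_def using vd by blast
    qed
  qed
  then show ?thesis using valid by blast
qed

lemma upd_valid:
  assumes vs: "valid s" and QV: "Q \<subseteq> V" and out: "\<And>v. v \<notin> Q \<Longrightarrow> t v = s v"
    and closed: "\<And>v. v \<in> Q \<Longrightarrow> nb v (s v) \<in> Q"
    and inQ: "\<And>v. v \<in> Q \<Longrightarrow> nb v (t v) \<in> Q \<and> t (nb v (t v)) = opp (t v)"
  shows "valid t"
  unfolding valid_def
proof (intro conjI ballI allI impI)
  fix v assume v: "v \<in> V"
  show "t (nb v (t v)) = opp (t v)"
  proof (cases "v \<in> Q")
    case True then show ?thesis using inQ by blast
  next
    case False
    then have tv: "t v = s v" using out by blast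
    let ?w = "nb v (s v)"
    have "?w \<notin> Q"
    proof
      assume "?w \<in> Q"
      then have "nb ?w (s ?w) \<in> Q" using closed by blast
      moreover have "nb ?w (s ?w) = v" using partner[OF vs v refl] .
      ultimately show False using False by simp
    qed
    then show ?thesis using tv out valid_opp[OF vs v] by simp
  qed
next
  fix v assume "v \<notin> V"
  then have "v \<notin> Q" using QV by blast
  then have "t v = s v" using out by blast
  then show "t v = U" using valid_out[OF vs \<open>v \<notin> V\<close>] by simp
qed

definition hor :: "(nat\<times>nat \<Rightarrow> dir) \<Rightarrow> nat \<Rightarrow> nat \<Rightarrow> bool" where
  "hor st i j \<longleftrightarrow> st (i,j) = Rt \<and> st (i, rt j) = Lt \<and> st (up i, j) = Rt \<and> st (up i, rt j) = Lt"
definition ver :: "(nat\<times>nat \<Rightarrow> dir) \<Rightarrow> nat \<Rightarrow> nat \<Rightarrow> bool" where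
  "ver st i j \<longleftrightarrow> st (i,j) = U \<and> st (i, rt j) = U \<and> st (up i, j) = D \<and> st (up i, rt j) = D"
definition setV :: "(nat\<times>nat \<Rightarrow> dir) \<Rightarrow> nat \<Rightarrow> nat \<Rightarrow> (nat\<times>nat \<Rightarrow> dir)" where
  "setV st i j = st((i,j) := U, (i, rt j) := U, (up i, j) := D, (up i, rt j) := D)"
definition setH :: "(nat\<times>nat \<Rightarrow> dir) \<Rightarrow> nat \<Rightarrow> nat \<Rightarrow> (nat\<times>nat \<Rightarrow> dir)" where
  "setH st i j = st((i,j) := Rt, (i, rt j) := Lt, (up i, j) := Rt, (up i, rt j) := Lt)"

definition tw :: "(nat\<times>nat \<Rightarrow> dir) \<Rightarrow> (nat\<times>nat \<Rightarrow> dir) \<Rightarrow> bool" where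
  "tw s t \<longleftrightarrow> valid s \<and> (\<exists>i<R. \<exists>j<C. (hor s i j \<and> t = setV s i j) \<or> (ver s i j \<and> t = setH s i j))"

definition sqQ :: "nat \<Rightarrow> nat \<Rightarrow> (nat\<times>nat) set" where
  "sqQ i j = {(i,j), (i, rt j), (up i, j), (up i, rt j)}"

lemma sq_distinct:
  assumes "i < R" "j < C"
  shows "(i,j) \<noteq> (i, rt j)" "(i,j) \<noteq> (up i, j)" "(i,j) \<noteq> (up i, rt j)"
    "(i, rt j) \<noteq> (up i, j)" "(i, rt j) \<noteq> (up i, rt j)" "(up i, j) \<noteq> (up i, rt j)"
  using assms by (auto dest: sym)

lemma setV_valid:
  assumes vs: "valid s" and ij: "i < R" "j < C" and h: "hor s i j"
  shows "valid (setV s i j)"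
proof (rule upd_valid[OF vs, of "sqQ i j"])
  show "sqQ i j \<subseteq> V" unfolding sqQ_def using ij by auto
  show "\<And>v. v \<notin> sqQ i j \<Longrightarrow> setV s i j v = s v" unfolding sqQ_def setV_def by auto
  show "\<And>v. v \<in> sqQ i j \<Longrightarrow> nb v (s v) \<in> sqQ i j"
    unfolding sqQ_def using h ij unfolding hor_def by auto
  show "\<And>v. v \<in> sqQ i j \<Longrightarrow> nb v (setV s i j v) \<in> sqQ i j \<and>
     setV s i j (nb v (setV s i j v)) = opp (setV s i j v)"
    unfolding sqQ_def setV_def using sq_distinct[OF ij] ij by auto
qed

lemma setH_valid:
  assumes vs: "valid s" and ij: "i < R" "j < C" and h: "ver s i j"
  shows "valid (setH s i j)"
proof (rule upd_valid[OF vs, of "sqQ i j"])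
  show "sqQ i j \<subseteq> V" unfolding sqQ_def using ij by auto
  show "\<And>v. v \<notin> sqQ i j \<Longrightarrow> setH s i j v = s v" unfolding sqQ_def setH_def by auto
  show "\<And>v. v \<in> sqQ i j \<Longrightarrow> nb v (s v) \<in> sqQ i j"
    unfolding sqQ_def using h ij unfolding ver_def by auto
  show "\<And>v. v \<in> sqQ i j \<Longrightarrow> nb v (setH s i j v) \<in> sqQ i j \<and>
     setH s i j (nb v (setH s i j v)) = opp (setH s i j v)"
    unfolding sqQ_def setH_def using sq_distinct[OF ij] ij by auto
qed

lemma tw_valid: "tw s t \<Longrightarrow> valid t"
  unfolding tw_def using setV_valid setH_valid by blast

lemma tw_sym: "tw s t \<Longrightarrow> tw t s"
proof -
  assume "tw s t"
  then obtain i j where ij: "i < R" "j < C" and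
    c: "(hor s i j \<and> t = setV s i j) \<or> (ver s i j \<and> t = setH s i j)" and vs: "valid s"
    unfolding tw_def by blast
  have vt: "valid t" using tw_valid[OF \<open>tw s t\<close>] .
  from c show "tw t s"
  proof
    assume a: "hor s i j \<and> t = setV s i j"
    then have "ver t i j" unfolding ver_def setV_def using sq_distinct[OF ij] by auto
    moreover have "s = setH t i j" using a sq_distinct[OF ij] unfolding setH_def setV_def hor_def
      by (intro ext) (simp add: fun_upd_def)
    ultimately show ?thesis using vt ij unfolding tw_def by blast
  next
    assume a: "ver s i j \<and> t = setH s i j"
    then have "hor t i j" unfolding hor_def setH_def using sq_distinct[OF ij] by auto
    moreover have "s = setV t i j" using a sq_distinct[OF ij] unfolding setH_def setV_def ver_def
      by (intro ext) (simp add: fun_upd_def)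
    ultimately show ?thesis using vt ij unfolding tw_def by blast
  qed
qed


lemma mofI: "v \<in> V \<Longrightarrow> {v, nb v (st v)} \<in> mof st"
  unfolding mof_def by blast

lemma mof_upd:
  assumes vs: "valid s" and vt: "valid t" and QV: "Q \<subseteq> V" and out: "\<And>v. v \<notin> Q \<Longrightarrow> t v = s v"
    and cs: "\<And>v. v \<in> Q \<Longrightarrow> nb v (s v) \<in> Q"
  shows "mof t = (mof s - {{v, nb v (s v)} | v. v \<in> Q}) \<union> {{v, nb v (t v)} | v. v \<in> Q}"
proof (intro equalityI subsetI)
  fix e assume "e \<in> mof t"
  then obtain v where v: "v \<in> V" "e = {v, nb v (t v)}" unfolding mof_def by blast
  show "e \<in> (mof s - {{v, nb v (s v)} | v. v \<in> Q}) \<union> {{v, nb v (t v)} | v. v \<in> Q}"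
  proof (cases "v \<in> Q")
    case True then show ?thesis using v by blast
  next
    case False
    then have tv: "t v = s v" using out by blast
    have "e = {v, nb v (s v)}" using v tv by simp
    then have "e \<in> mof s" unfolding mof_def using v(1) by blast
    moreover have "e \<notin> {{v, nb v (s v)} | v. v \<in> Q}"
    proof
      assume "e \<in> {{v, nb v (s v)} | v. v \<in> Q}"
      then obtain w where w: "w \<in> Q" "e = {w, nb w (s w)}" by blast
      have "v \<in> e" using v by blast
      then have "v = w \<or> v = nb w (s w)" using w by blast
      then show False using False w cs by blast
    qed
    ultimately show ?thesis by blast
  qed
next
  fix e assume e: "e \<in> (mof s - {{v, nb v (s v)} | v. v \<in> Q}) \<union> {{v, nb v (t v)} | v. v \<in> Q}"
  show "e \<in> mof t"
  proof (cases "e \<in> {{v, nb v (t v)} | v. v \<in> Q}")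
    case True then show ?thesis using QV unfolding mof_def by blast
  next
    case False
    then have "e \<in> mof s" "e \<notin> {{v, nb v (s v)} | v. v \<in> Q}" using e by blast+
    then obtain v where v: "v \<in> V" "e = {v, nb v (s v)}" "v \<notin> Q" unfolding mof_def by blast
    then have "t v = s v" using out by blast
    then have "e = {v, nb v (t v)}" using v by simp
    then show ?thesis unfolding mof_def using v(1) by blast
  qed
qed

definition hE1 where "hE1 i j = {(i,j), (i, rt j)}"
definition hE2 where "hE2 i j = {(up i,j), (up i, rt j)}"
definition vE1 where "vE1 i j = {(i,j), (up i, j)}"
definition vE2 where "vE2 i j = {(i, rt j), (up i, rt j)}"

lemma sq_edges_hor:
  assumes "i < R" "j < C" "hor s i j"
  shows "{{v, nb v (s v)} | v. v \<in> sqQ i j} = {hE1 i j, hE2 i j}"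
proof
  show "{{v, nb v (s v)} | v. v \<in> sqQ i j} \<subseteq> {hE1 i j, hE2 i j}"
    using assms unfolding sqQ_def hor_def hE1_def hE2_def by (auto simp: insert_commute)
  have "hE1 i j = {(i,j), nb (i,j) (s (i,j))}" "hE2 i j = {(up i,j), nb (up i,j) (s (up i,j))}"
    using assms unfolding hor_def hE1_def hE2_def by auto
  moreover have "(i,j) \<in> sqQ i j" "(up i, j) \<in> sqQ i j" unfolding sqQ_def by auto
  ultimately show "{hE1 i j, hE2 i j} \<subseteq> {{v, nb v (s v)} | v. v \<in> sqQ i j}" by blast
qed

lemma sq_edges_ver:
  assumes "i < R" "j < C" "ver s i j"
  shows "{{v, nb v (s v)} | v. v \<in> sqQ i j} = {vE1 i j, vE2 i j}"
proof
  show "{{v, nb v (s v)} | v. v \<in> sqQ i j} \<subseteq> {vE1 i j, vE2 i j}"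
    using assms unfolding sqQ_def ver_def vE1_def vE2_def by (auto simp: insert_commute)
  have "vE1 i j = {(i,j), nb (i,j) (s (i,j))}" "vE2 i j = {(i, rt j), nb (i, rt j) (s (i, rt j))}"
    using assms unfolding ver_def vE1_def vE2_def by auto
  moreover have "(i,j) \<in> sqQ i j" "(i, rt j) \<in> sqQ i j" unfolding sqQ_def by auto
  ultimately show "{vE1 i j, vE2 i j} \<subseteq> {{v, nb v (s v)} | v. v \<in> sqQ i j}" by blast
qed

lemma hor_setV: "i < R \<Longrightarrow> j < C \<Longrightarrow> ver (setV s i j) i j"
  unfolding ver_def setV_def using sq_distinct[of i j] by auto
lemma ver_setH: "i < R \<Longrightarrow> j < C \<Longrightarrow> hor (setH s i j) i j"
  unfolding hor_def setH_def using sq_distinct[of i j] by auto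

lemma mof_setV:
  assumes vs: "valid s" and ij: "i < R" "j < C" and h: "hor s i j"
  shows "mof (setV s i j) = (mof s - {hE1 i j, hE2 i j}) \<union> {vE1 i j, vE2 i j}"
proof -
  have "mof (setV s i j) = (mof s - {{v, nb v (s v)} | v. v \<in> sqQ i j}) \<union> {{v, nb v (setV s i j v)} | v. v \<in> sqQ i j}"
  proof (rule mof_upd[OF vs setV_valid[OF vs ij h]])
    show "sqQ i j \<subseteq> V" unfolding sqQ_def using ij by auto
    show "\<And>v. v \<notin> sqQ i j \<Longrightarrow> setV s i j v = s v" unfolding sqQ_def setV_def by auto
    show "\<And>v. v \<in> sqQ i j \<Longrightarrow> nb v (s v) \<in> sqQ i j"
      unfolding sqQ_def using h ij unfolding hor_def by auto
  qed
  moreover have "\<And>v. v \<in> sqQ i j \<Longrightarrow> setV s i j v = (setV s i j) v" by simp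
  ultimately show ?thesis using sq_edges_hor[OF ij h] sq_edges_ver[OF ij hor_setV[OF ij]] by simp
qed

lemma mof_setH:
  assumes vs: "valid s" and ij: "i < R" "j < C" and h: "ver s i j"
  shows "mof (setH s i j) = (mof s - {vE1 i j, vE2 i j}) \<union> {hE1 i j, hE2 i j}"
proof -
  have "mof (setH s i j) = (mof s - {{v, nb v (s v)} | v. v \<in> sqQ i j}) \<union> {{v, nb v (setH s i j v)} | v. v \<in> sqQ i j}"
  proof (rule mof_upd[OF vs setH_valid[OF vs ij h]])
    show "sqQ i j \<subseteq> V" unfolding sqQ_def using ij by auto
    show "\<And>v. v \<notin> sqQ i j \<Longrightarrow> setH s i j v = s v" unfolding sqQ_def setH_def by auto
    show "\<And>v. v \<in> sqQ i j \<Longrightarrow> nb v (s v) \<in> sqQ i j"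
      unfolding sqQ_def using h ij unfolding ver_def by auto
  qed
  then show ?thesis using sq_edges_ver[OF ij h] sq_edges_hor[OF ij ver_setH[OF ij]] by simp
qed

definition F :: "(nat\<times>nat \<Rightarrow> dir) \<Rightarrow> nat" where
  "F st = forcing_number V E (mof st)"

lemma sq_facts:
  assumes ij: "i < R" "j < C"
  shows "hE1 i j \<union> hE2 i j = vE1 i j \<union> vE2 i j" "hE1 i j \<inter> hE2 i j = {}" "vE1 i j \<inter> vE2 i j = {}"
    "hE1 i j \<in> E" "hE2 i j \<in> E" "vE1 i j \<in> E" "vE2 i j \<in> E"
    "hE1 i j \<inter> vE1 i j \<noteq> {}" "hE2 i j \<inter> vE1 i j \<noteq> {}" "hE1 i j \<inter> vE2 i j \<noteq> {}"
    "vE1 i j \<inter> hE1 i j \<noteq> {}" "vE2 i j \<inter> hE1 i j \<noteq> {}" "vE1 i j \<inter> hE2 i j \<noteq> {}"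
    "hE1 i j \<noteq> vE1 i j" "hE1 i j \<noteq> vE2 i j" "hE2 i j \<noteq> vE1 i j" "hE2 i j \<noteq> vE2 i j"
    "vE1 i j \<noteq> hE1 i j" "vE1 i j \<noteq> hE2 i j" "vE2 i j \<noteq> hE1 i j" "vE2 i j \<noteq> hE2 i j"
proof -
  have e1: "hE1 i j = {(i,j), nb (i,j) Rt}" "hE2 i j = {(up i,j), nb (up i,j) Rt}"
    "vE1 i j = {(i,j), nb (i,j) U}" "vE2 i j = {(i, rt j), nb (i, rt j) U}"
    unfolding hE1_def hE2_def vE1_def vE2_def by auto
  show "hE1 i j \<in> E" "hE2 i j \<in> E" "vE1 i j \<in> E" "vE2 i j \<in> E"
    unfolding e1 using ij by (auto intro!: edge_E simp del: nb.simps)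
  show "hE1 i j \<union> hE2 i j = vE1 i j \<union> vE2 i j" unfolding hE1_def hE2_def vE1_def vE2_def by auto
  show "hE1 i j \<inter> hE2 i j = {}" "vE1 i j \<inter> vE2 i j = {}"
    unfolding hE1_def hE2_def vE1_def vE2_def using sq_distinct[OF ij] by auto
  show "hE1 i j \<inter> vE1 i j \<noteq> {}" "hE2 i j \<inter> vE1 i j \<noteq> {}" "hE1 i j \<inter> vE2 i j \<noteq> {}"
    "vE1 i j \<inter> hE1 i j \<noteq> {}" "vE2 i j \<inter> hE1 i j \<noteq> {}" "vE1 i j \<inter> hE2 i j \<noteq> {}"
    unfolding hE1_def hE2_def vE1_def vE2_def by auto
  show "hE1 i j \<noteq> vE1 i j" "hE1 i j \<noteq> vE2 i j" "hE2 i j \<noteq> vE1 i j" "hE2 i j \<noteq> vE2 i j"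
    "vE1 i j \<noteq> hE1 i j" "vE1 i j \<noteq> hE2 i j" "vE2 i j \<noteq> hE1 i j" "vE2 i j \<noteq> hE2 i j"
    unfolding hE1_def hE2_def vE1_def vE2_def using sq_distinct[OF ij] by (auto simp: doubleton_eq_iff)
qed

lemma tw_F: "tw s t \<Longrightarrow> F t \<le> F s + 1"
proof -
  assume "tw s t"
  then obtain i j where ij: "i < R" "j < C" and
    c: "(hor s i j \<and> t = setV s i j) \<or> (ver s i j \<and> t = setH s i j)" and vs: "valid s"
    unfolding tw_def by blast
  have vt: "valid t" using tw_valid[OF \<open>tw s t\<close>] .
  note sf = sq_facts[OF ij]
  from c show ?thesis
  proof
    assume a: "hor s i j \<and> t = setV s i j"
    have ab: "hE1 i j \<in> mof s" "hE2 i j \<in> mof s"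
      using mofI[of "(i,j)" s] mofI[of "(up i,j)" s] ij a by (simp_all add: hor_def hE1_def hE2_def)
    have m: "mof t = (mof s - {hE1 i j, hE2 i j}) \<union> {vE1 i j, vE2 i j}"
      using mof_setV[OF vs ij conjunct1[OF a]] a by simp
    show ?thesis unfolding F_def
      by (rule twist_fn[OF valid_pm[OF vs] valid_pm[OF vt] EV_tor ab m
        sf(1) sf(2) sf(3) sf(4) sf(5) sf(8) sf(9) sf(10) sf(14) sf(15) sf(16) sf(17)])
  next
    assume a: "ver s i j \<and> t = setH s i j"
    have ab: "vE1 i j \<in> mof s" "vE2 i j \<in> mof s"
      using mofI[of "(i,j)" s] mofI[of "(i, rt j)" s] ij a by (simp_all add: ver_def vE1_def vE2_def)
    have m: "mof t = (mof s - {vE1 i j, vE2 i j}) \<union> {hE1 i j, hE2 i j}"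
      using mof_setH[OF vs ij conjunct1[OF a]] a by simp
    show ?thesis unfolding F_def
      by (rule twist_fn[OF valid_pm[OF vs] valid_pm[OF vt] EV_tor ab m
        sf(1)[symmetric] sf(3) sf(2) sf(6) sf(7) sf(11) sf(12) sf(13) sf(18) sf(19) sf(20) sf(21)])
  qed
qed

definition reach where "reach = tw\<^sup>*\<^sup>*"

lemma reach_valid: "reach s t \<Longrightarrow> valid s \<Longrightarrow> valid t"
  unfolding reach_def by (induct rule: rtranclp_induct) (auto dest: tw_valid)

lemma reach_refl: "reach s s" unfolding reach_def by simp
lemma reach_step: "reach s t \<Longrightarrow> tw t u \<Longrightarrow> reach s u" unfolding reach_def by simp
lemma reach_trans: "reach s t \<Longrightarrow> reach t u \<Longrightarrow> reach s u" unfolding reach_def by simp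
lemma tw_reach: "tw s t \<Longrightarrow> reach s t" unfolding reach_def by simp

lemma reach_sym: "reach s t \<Longrightarrow> reach t s"
  unfolding reach_def
proof (induct rule: rtranclp_induct)
  case base then show ?case by simp
next
  case (step y z)
  then have "tw z y" using tw_sym by blast
  then show ?case using step(3) by (rule converse_rtranclp_into_rtranclp)
qed

lemma reach_ivt:
  assumes "reach s t" "min (F s) (F t) \<le> k" "k \<le> max (F s) (F t)"
  shows "\<exists>u. reach s u \<and> F u = k"
proof (cases "F s \<le> F t")
  case True
  then show ?thesis using ivt_path[of tw s t F k] assms tw_F unfolding reach_def by auto
next
  case False
  then have "F t \<le> k" "k \<le> F s" using assms by auto
  then obtain u where "reach t u" "F u = k" using ivt_path[of tw t s F k] reach_sym[OF assms(1)] tw_F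
    unfolding reach_def by blast
  then show ?thesis using reach_trans[OF assms(1) \<open>reach t u\<close>] by blast
qed

end

context tor begin

definition hz :: "(nat\<times>nat \<Rightarrow> dir) \<Rightarrow> nat \<Rightarrow> nat \<Rightarrow> bool" where
  "hz st i j \<longleftrightarrow> st (i,j) = Lt \<or> st (i,j) = Rt"

definition free :: "(nat\<times>nat \<Rightarrow> dir) \<Rightarrow> nat \<Rightarrow> nat \<Rightarrow> nat \<Rightarrow> bool" where
  "free st j p g \<longleftrightarrow> (\<forall>k. 0 < k \<and> k < g \<longrightarrow> \<not> hz st (sh p k) j)"

lemma vR: "valid st \<Longrightarrow> i < R \<Longrightarrow> j < C \<Longrightarrow> st (i,j) = Rt \<Longrightarrow> st (i, rt j) = Lt"
  using valid_opp[of st "(i,j)"] by simp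
lemma vL: "valid st \<Longrightarrow> i < R \<Longrightarrow> j < C \<Longrightarrow> st (i,j) = Lt \<Longrightarrow> st (i, lf j) = Rt"
  using valid_opp[of st "(i,j)"] by simp
lemma vU: "valid st \<Longrightarrow> i < R \<Longrightarrow> j < C \<Longrightarrow> st (i,j) = U \<Longrightarrow> st (up i, j) = D"
  using valid_opp[of st "(i,j)"] by simp
lemma vD: "valid st \<Longrightarrow> i < R \<Longrightarrow> j < C \<Longrightarrow> st (i,j) = D \<Longrightarrow> st (dn i, j) = U"
  using valid_opp[of st "(i,j)"] by simp
lemma vL': "valid st \<Longrightarrow> i < R \<Longrightarrow> j < C \<Longrightarrow> st (i, rt j) = Lt \<Longrightarrow> st (i,j) = Rt"
  using vL[of st i "rt j"] by simp
lemma vR': "valid st \<Longrightarrow> i < R \<Longrightarrow> j < C \<Longrightarrow> st (i, lf j) = Rt \<Longrightarrow> st (i,j) = Lt"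
  using vR[of st i "lf j"] by simp
lemma vD': "valid st \<Longrightarrow> i < R \<Longrightarrow> j < C \<Longrightarrow> st (up i, j) = D \<Longrightarrow> st (i,j) = U"
  using vD[of st "up i" j] by simp

lemma dir_cases4: "d \<noteq> Lt \<Longrightarrow> d \<noteq> Rt \<Longrightarrow> d = U \<or> d = D"
  by (cases d) auto

lemma not_hz: "\<not> hz st i j \<Longrightarrow> st (i,j) = U \<or> st (i,j) = D"
  unfolding hz_def using dir_cases4 by blast

lemma up_eq_sh: "up p = sh p 1" unfolding up_def ..
lemma up_up_sh: "up (up p) = sh p 2" unfolding up_def sh_sh by (simp add: numeral_2_eq_2)
lemma sh_sh_diff: "k \<le> g \<Longrightarrow> sh (sh p k) (g - k) = sh p g" by (simp add: sh_sh)

lemma parity: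
  assumes vs: "valid st" and j: "j < C"
  shows "p < R \<Longrightarrow> st (p,j) \<noteq> U \<Longrightarrow> 0 < g \<Longrightarrow> g \<le> R \<Longrightarrow> hz st (sh p g) j \<Longrightarrow> free st j p g \<Longrightarrow> odd g"
proof (induction g arbitrary: p rule: less_induct)
  case (less g)
  show ?case
  proof (cases "g = 1")
    case True then show ?thesis by simp
  next
    case False
    then have g2: "g \<ge> 2" using less.prems by simp
    have "\<not> hz st (sh p 1) j" using less.prems(6) g2 unfolding free_def by simp
    then have c: "st (up p, j) = U \<or> st (up p, j) = D" using not_hz up_eq_sh by metis
    have "st (up p, j) \<noteq> D"
    proof
      assume "st (up p, j) = D"
      then have "st (p, j) = U" using vD'[OF vs less.prems(1) j] by blast
      then show False using less.prems(2) by simp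
    qed
    then have "st (up p, j) = U" using c by blast
    then have d2: "st (sh p 2, j) = D" using vU[OF vs _ j, of "up p"] up_up_sh by simp
    have "g \<noteq> 2"
    proof
      assume "g = 2"
      then have "hz st (sh p 2) j" using less.prems(5) by simp
      then show False using d2 unfolding hz_def by simp
    qed
    then have g3: "g \<ge> 3" using g2 by simp
    have "odd (g - 2)"
    proof (rule less.IH[of "g - 2" "sh p 2"])
      show "g - 2 < g" "sh p 2 < R" "st (sh p 2, j) \<noteq> U" "0 < g - 2" "g - 2 \<le> R"
        using g3 d2 less.prems by auto
      show "hz st (sh (sh p 2) (g - 2)) j" using less.prems(5) g3 sh_sh_diff[of 2 g p] by simp
      show "free st j (sh p 2) (g - 2)"
        unfolding free_def
      proof (intro allI impI)
        fix k assume "0 < k \<and> k < g - 2"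
        then have "0 < k + 2 \<and> k + 2 < g" by arith
        then have "\<not> hz st (sh p (2 + k)) j" using less.prems(6) unfolding free_def by (simp add: add.commute)
        then show "\<not> hz st (sh (sh p 2) k) j" by (simp add: sh_sh)
      qed
    qed
    then show ?thesis using g3 by simp
  qed
qed

lemma next_pt:
  assumes vs: "valid st" and j: "j < C" and p: "p < R" and h: "hz st p j"
  shows "\<exists>g. 0 < g \<and> g < R \<and> odd g \<and> hz st (sh p g) j \<and> free st j p g"
proof -
  define P where "P g \<longleftrightarrow> 0 < g \<and> hz st (sh p g) j" for g
  have PR: "P R" unfolding P_def using sh_R[OF p] h R4 by simp
  define g where "g = (LEAST g. P g)"
  have Pg: "P g" unfolding g_def using PR by (rule LeastI)
  have gR: "g \<le> R" unfolding g_def using PR by (rule Least_le)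
  have fr: "free st j p g"
    unfolding free_def
  proof (intro allI impI)
    fix k assume k: "0 < k \<and> k < g"
    then have "\<not> P k" unfolding g_def using not_less_Least by blast
    then show "\<not> hz st (sh p k) j" using k unfolding P_def by blast
  qed
  have "st (p,j) \<noteq> U" using h unfolding hz_def by auto
  then have og: "odd g" using parity[OF vs j p _ _ gR _ fr] Pg unfolding P_def by blast
  then have "g \<noteq> R" using evenR by auto
  then show ?thesis using og Pg gR fr unfolding P_def by auto
qed


definition spair :: "(nat\<times>nat \<Rightarrow> dir) \<Rightarrow> dir \<Rightarrow> nat \<Rightarrow> nat \<Rightarrow> nat \<Rightarrow> bool" where
  "spair st s j p g \<longleftrightarrow> j < C \<and> p < R \<and> 0 < g \<and> g < R \<and> st (p,j) = s \<and> st (sh p g, j) = s \<and> free st j p g"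

definition clean :: "(nat\<times>nat \<Rightarrow> dir) \<Rightarrow> nat \<Rightarrow> nat \<Rightarrow> nat \<Rightarrow> bool" where
  "clean st j p g \<longleftrightarrow> spair st Rt j p g \<and> free st (rt j) p g"

lemma bin_dir: "x = Lt \<or> x = Rt \<Longrightarrow> s = Lt \<or> s = Rt \<Longrightarrow> x \<noteq> opp s \<Longrightarrow> x = s"
  by auto

lemma hz_iff: "hz st i j \<longleftrightarrow> st (i,j) = Lt \<or> st (i,j) = Rt" unfolding hz_def ..

lemma inner:
  assumes vs: "valid st" and sp: "spair st s j p g" and s: "s = Lt \<or> s = Rt" and j2: "j2 < C"
    and H1: "\<And>x. x < R \<Longrightarrow> st (x, j2) = opp s \<Longrightarrow> st (x, j) = s"
    and H2: "st (p, j2) = opp s" "st (sh p g, j2) = opp s"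
    and nf: "\<not> free st j2 p g"
  shows "\<exists>p' g'. g' < g \<and> spair st s j2 p' g'"
proof -
  have j: "j < C" and p: "p < R" and g: "0 < g" "g < R" and sv: "st (p,j) = s" "st (sh p g, j) = s"
    and fr: "free st j p g" using sp unfolding spair_def by auto
  have os: "opp s = Lt \<or> opp s = Rt" using s by auto
  have og: "odd g"
    using parity[OF vs j p _ g(1) _ _ fr] sv s g by (auto simp: hz_def)
  define Q where "Q k \<longleftrightarrow> 0 < k \<and> k < g \<and> hz st (sh p k) j2" for k
  obtain k0 where "Q k0" using nf unfolding free_def Q_def by blast
  define k1 where "k1 = (LEAST k. Q k)"
  have Qk1: "Q k1" unfolding k1_def using \<open>Q k0\<close> by (rule LeastI)
  have fr1: "free st j2 p k1"
    unfolding free_def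
  proof (intro allI impI)
    fix k assume k: "0 < k \<and> k < k1"
    then have "\<not> Q k" unfolding k1_def using not_less_Least by blast
    then show "\<not> hz st (sh p k) j2" using k Qk1 unfolding Q_def by auto
  qed
  have ok1: "odd k1"
    using parity[OF vs j2 p _ _ _ _ fr1] H2 os Qk1 g unfolding Q_def by auto
  have nf2: "\<not> free st j2 (sh p k1) (g - k1)"
  proof
    assume f2: "free st j2 (sh p k1) (g - k1)"
    have "st (sh p k1, j2) \<noteq> U" using Qk1 unfolding Q_def hz_def by auto
    moreover have "hz st (sh (sh p k1) (g - k1)) j2"
      using sh_sh_diff[of k1 g p] Qk1 H2(2) os unfolding Q_def hz_def by auto
    ultimately have "odd (g - k1)"
      using parity[OF vs j2 sh_lt _ _ _ _ f2] Qk1 g unfolding Q_def by auto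
    then show False using og ok1 Qk1 unfolding Q_def by auto
  qed
  define Q2 where "Q2 k \<longleftrightarrow> 0 < k \<and> k < g - k1 \<and> hz st (sh (sh p k1) k) j2" for k
  obtain k0' where "Q2 k0'" using nf2 unfolding free_def Q2_def by blast
  define k2 where "k2 = (LEAST k. Q2 k)"
  have Qk2: "Q2 k2" unfolding k2_def using \<open>Q2 k0'\<close> by (rule LeastI)
  have fr2: "free st j2 (sh p k1) k2"
    unfolding free_def
  proof (intro allI impI)
    fix k assume k: "0 < k \<and> k < k2"
    then have "\<not> Q2 k" unfolding k2_def using not_less_Least by blast
    then show "\<not> hz st (sh (sh p k1) k) j2" using k Qk2 unfolding Q2_def by auto
  qed
  have side: "\<And>k. 0 < k \<Longrightarrow> k < g \<Longrightarrow> hz st (sh p k) j2 \<Longrightarrow> st (sh p k, j2) = s"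
  proof -
    fix k assume k: "0 < k" "k < g" "hz st (sh p k) j2"
    have "st (sh p k, j2) \<noteq> opp s"
    proof
      assume "st (sh p k, j2) = opp s"
      then have "st (sh p k, j) = s" using H1 by simp
      then have "hz st (sh p k) j" using s unfolding hz_def by auto
      then show False using fr k unfolding free_def by blast
    qed
    then show "st (sh p k, j2) = s" using bin_dir[OF _ s] k(3) unfolding hz_def by blast
  qed
  have s1: "st (sh p k1, j2) = s" using side Qk1 unfolding Q_def by blast
  have "k1 + k2 < g" using Qk2 unfolding Q2_def by arith
  then have s2: "st (sh (sh p k1) k2, j2) = s"
    using side[of "k1 + k2"] Qk1 Qk2 unfolding Q_def Q2_def by (simp add: sh_sh)
  have "spair st s j2 (sh p k1) k2"
    unfolding spair_def using j2 s1 s2 fr2 Qk2 g Qk1 unfolding Q2_def Q_def by auto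
  moreover have "k2 < g" using Qk2 unfolding Q2_def by auto
  ultimately show ?thesis by blast
qed

lemma min_clean:
  assumes vs: "valid st" and ex: "\<exists>s j p g. (s = Lt \<or> s = Rt) \<and> spair st s j p g"
  shows "\<exists>j p g. clean st j p g"
proof -
  define PP where "PP g \<longleftrightarrow> (\<exists>s j p. (s = Lt \<or> s = Rt) \<and> spair st s j p g)" for g
  obtain g1 where "PP g1" using ex unfolding PP_def by blast
  define g0 where "g0 = (LEAST g. PP g)"
  have "PP g0" unfolding g0_def using \<open>PP g1\<close> by (rule LeastI)
  then obtain s j p where s: "s = Lt \<or> s = Rt" and sp: "spair st s j p g0" unfolding PP_def by blast
  have j: "j < C" and p: "p < R" and g: "0 < g0" "g0 < R" and sv: "st (p,j) = s" "st (sh p g0, j) = s"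
    and fr: "free st j p g0" using sp unfolding spair_def by auto
  have minimal: "\<And>s' j' p' g'. g' < g0 \<Longrightarrow> s' = Lt \<or> s' = Rt \<Longrightarrow> \<not> spair st s' j' p' g'"
  proof -
    fix s' j' p' g' assume "g' < g0" "s' = Lt \<or> s' = Rt"
    then have "\<not> PP g'" unfolding g0_def using not_less_Least by blast
    then show "\<not> spair st s' j' p' g'" using \<open>s' = Lt \<or> s' = Rt\<close> unfolding PP_def by blast
  qed
  from s show ?thesis
  proof
    assume sR: "s = Rt"
    show ?thesis
    proof (cases "free st (rt j) p g0")
      case True then show ?thesis using sp sR unfolding clean_def by blast
    next
      case False
      have "\<exists>p' g'. g' < g0 \<and> spair st Rt (rt j) p' g'"
      proof (rule inner[OF vs sp[unfolded sR]])
        show "Rt = Lt \<or> Rt = Rt" "rt j < C" by auto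
        show "\<And>x. x < R \<Longrightarrow> st (x, rt j) = opp Rt \<Longrightarrow> st (x, j) = Rt" using vL'[OF vs _ j] by simp
        show "st (p, rt j) = opp Rt" "st (sh p g0, rt j) = opp Rt" using vR[OF vs _ j] sv sR p by auto
        show "\<not> free st (rt j) p g0" using False .
      qed
      then show ?thesis using minimal by blast
    qed
  next
    assume sL: "s = Lt"
    show ?thesis
    proof (cases "free st (lf j) p g0")
      case True
      have "spair st Rt (lf j) p g0" unfolding spair_def using True vL[OF vs _ j] sv sL p g by auto
      moreover have "free st (rt (lf j)) p g0" using fr j by simp
      ultimately show ?thesis unfolding clean_def by blast
    next
      case False
      have "\<exists>p' g'. g' < g0 \<and> spair st Lt (lf j) p' g'"
      proof (rule inner[OF vs sp[unfolded sL]])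
        show "Lt = Lt \<or> Lt = Rt" "lf j < C" by auto
        show "\<And>x. x < R \<Longrightarrow> st (x, lf j) = opp Lt \<Longrightarrow> st (x, j) = Lt" using vR'[OF vs _ j] by simp
        show "st (p, lf j) = opp Lt" "st (sh p g0, lf j) = opp Lt" using vL[OF vs _ j] sv sL p by auto
        show "\<not> free st (lf j) p g0" using False .
      qed
      then show ?thesis using minimal by blast
    qed
  qed
qed


lemma sh_surj: "x < R \<Longrightarrow> y < R \<Longrightarrow> \<exists>d<R. sh x d = y"
proof -
  assume x: "x < R" and y: "y < R"
  define d where "d = (y + R - x) mod R"
  have "sh x d = (x + (y + R - x)) mod R" unfolding sh_def d_def by (simp add: mod_add_right_eq)
  also have "\<dots> = (y + R) mod R" using x by simp
  also have "\<dots> = y" using y by simp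
  finally show ?thesis using R4 unfolding d_def by (intro exI[of _ d]) (simp add: d_def)
qed

lemma wlem:
  assumes vs: "valid st" and j: "j < C" and x: "x < R" and hx: "hz st x j"
    and nop: "\<And>s p g. s = Lt \<or> s = Rt \<Longrightarrow> \<not> spair st s j p g"
  shows "d < R \<Longrightarrow> hz st (sh x d) j \<Longrightarrow> (st (sh x d, j) = st (x,j) \<longleftrightarrow> even d)"
proof (induction d rule: less_induct)
  case (less d)
  show ?case
  proof (cases "d = 0")
    case True then show ?thesis using x by simp
  next
    case False
    define S where "S = {e. e < d \<and> hz st (sh x e) j}"
    have finS: "finite S" unfolding S_def by simp
    have "0 \<in> S" unfolding S_def using False hx x by simp
    define d' where "d' = Max S"
    have d'S: "d' \<in> S" unfolding d'_def using finS \<open>0 \<in> S\<close> by (intro Max_in) auto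
    have d'max: "\<And>e. e \<in> S \<Longrightarrow> e \<le> d'" unfolding d'_def using finS by simp
    have dd: "d' < d" "hz st (sh x d') j" using d'S unfolding S_def by auto
    have fr: "free st j (sh x d') (d - d')"
      unfolding free_def
    proof (intro allI impI)
      fix k assume k: "0 < k \<and> k < d - d'"
      then have "d' + k \<notin> S" using d'max by fastforce
      moreover have "d' + k < d" using k by arith
      ultimately have "\<not> hz st (sh x (d' + k)) j" unfolding S_def by blast
      then show "\<not> hz st (sh (sh x d') k) j" by (simp add: sh_sh)
    qed
    have hd: "hz st (sh (sh x d') (d - d')) j" using sh_sh_diff[of d' d x] dd less.prems by simp
    have "st (sh x d', j) \<noteq> U" using dd unfolding hz_def by auto
    then have odd: "odd (d - d')"
      using parity[OF vs j sh_lt _ _ _ hd fr] dd less.prems by auto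
    have neq: "st (sh x d, j) \<noteq> st (sh x d', j)"
    proof
      assume eq: "st (sh x d, j) = st (sh x d', j)"
      have "spair st (st (sh x d', j)) j (sh x d') (d - d')"
        unfolding spair_def using j dd less.prems fr eq sh_sh_diff[of d' d x] by auto
      moreover have "st (sh x d', j) = Lt \<or> st (sh x d', j) = Rt" using dd unfolding hz_def by auto
      ultimately show False using nop by blast
    qed
    have IH: "st (sh x d', j) = st (x,j) \<longleftrightarrow> even d'" using less.IH[of d'] dd less.prems by simp
    have "even d \<longleftrightarrow> \<not> even d'" using odd dd by auto
    moreover have "st (sh x d, j) = Lt \<or> st (sh x d, j) = Rt" using less.prems unfolding hz_def by auto
    moreover have "st (sh x d', j) = Lt \<or> st (sh x d', j) = Rt" using dd unfolding hz_def by auto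
    moreover have "st (x, j) = Lt \<or> st (x, j) = Rt" using hx unfolding hz_def by auto
    ultimately show ?thesis using neq IH by auto
  qed
qed

lemma chase:
  assumes vs: "valid st" and nop: "\<And>s j p g. s = Lt \<or> s = Rt \<Longrightarrow> \<not> spair st s j p g"
    and j0: "j0 < C" and r: "r < R" and rR: "st (r, j0) = Rt"
  shows "\<exists>r'. r' < R \<and> st (r', cs j0 t) = Rt \<and> (even r' \<longleftrightarrow> (even r \<longleftrightarrow> even t))"
proof (induction t)
  case 0 then show ?case using r rR j0 by (intro exI[of _ r]) simp
next
  case (Suc t)
  then obtain r' where r': "r' < R" "st (r', cs j0 t) = Rt" "even r' \<longleftrightarrow> (even r \<longleftrightarrow> even t)" by blast
  let ?J = "cs j0 t"
  have L: "st (r', rt ?J) = Lt" using vR[OF vs r'(1) cs_lt r'(2)] .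
  then have "hz st r' (rt ?J)" unfolding hz_def by simp
  then obtain g where g: "0 < g" "g < R" "odd g" "hz st (sh r' g) (rt ?J)" "free st (rt ?J) r' g"
    using next_pt[OF vs rt_lt r'(1)] by blast
  have "st (sh r' g, rt ?J) \<noteq> Lt"
  proof
    assume "st (sh r' g, rt ?J) = Lt"
    then have "spair st Lt (rt ?J) r' g" unfolding spair_def using g r' L by auto
    then show False using nop by blast
  qed
  then have "st (sh r' g, rt ?J) = Rt" using g(4) unfolding hz_def by auto
  moreover have "rt ?J = cs j0 (Suc t)" by (rule rt_cs)
  moreover have "even (sh r' g) \<longleftrightarrow> (even r \<longleftrightarrow> even (Suc t))" using sh_even[of r' g] g(3) r'(3) by auto
  ultimately show ?case using sh_lt by metis
qed

lemma pair_exists: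
  assumes vs: "valid st" and h: "(i,j) \<in> V" "hz st i j"
  shows "\<exists>s j p g. (s = Lt \<or> s = Rt) \<and> spair st s j p g"
proof (rule ccontr)
  assume "\<not> ?thesis"
  then have nop: "\<And>s j p g. s = Lt \<or> s = Rt \<Longrightarrow> \<not> spair st s j p g" by blast
  have ij: "i < R" "j < C" using h by auto
  obtain r j0 where r: "r < R" "j0 < C" "st (r, j0) = Rt"
  proof (cases "st (i,j) = Rt")
    case True then show ?thesis using that ij by blast
  next
    case False
    then have "st (i,j) = Lt" using h unfolding hz_def by auto
    then have "st (i, lf j) = Rt" using vL[OF vs ij] by blast
    then show ?thesis using that ij lf_lt by blast
  qed
  obtain r' where r': "r' < R" "st (r', cs j0 C) = Rt" "even r' \<longleftrightarrow> (even r \<longleftrightarrow> even C)"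
    using chase[OF vs nop r(2) r(1) r(3)] by blast
  have r'2: "st (r', j0) = Rt" using r' cs_C[OF r(2)] by simp
  have par: "even r' \<longleftrightarrow> \<not> even r" using r'(3) oddC by simp
  obtain d where d: "d < R" "sh r d = r'" using sh_surj[OF r(1) r'(1)] by blast
  have hzr: "hz st r j0" using r unfolding hz_def by simp
  have "st (sh r d, j0) = st (r, j0) \<longleftrightarrow> even d"
    using wlem[OF vs r(2) r(1) hzr nop d(1)] d r'2 unfolding hz_def by simp
  then have "even d" using d r'2 r by simp
  then have "even r' = even r" using sh_even[of r d] d by simp
  then show False using par by simp
qed

lemma clean_exists:
  assumes vs: "valid st" and h: "v \<in> V" "st v = Lt \<or> st v = Rt"
  shows "\<exists>j p g. clean st j p g"
proof -
  obtain i j where v: "v = (i,j)" by (cases v)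
  show ?thesis using min_clean[OF vs pair_exists[OF vs]] h v unfolding hz_def by blast
qed


definition off :: "nat \<Rightarrow> nat \<Rightarrow> nat" where "off p i = (i + R - p) mod R"

lemma off_lt[simp]: "off p i < R" unfolding off_def using R4 by simp

lemma off_sh: "p < R \<Longrightarrow> k < R \<Longrightarrow> off p (sh p k) = k"
proof -
  assume p: "p < R" and k: "k < R"
  show ?thesis
  proof (cases "p + k < R")
    case True
    then have "sh p k = p + k" unfolding sh_def by simp
    then show ?thesis unfolding off_def using k by simp
  next
    case False
    then have "sh p k = p + k - R" unfolding sh_def using p k by (simp add: mod_if)
    then have "sh p k + R - p = k" using False by simp
    then show ?thesis unfolding off_def using k by simp
  qed
qed

lemma sh_off: "p < R \<Longrightarrow> i < R \<Longrightarrow> sh p (off p i) = i"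
proof -
  assume p: "p < R" and i: "i < R"
  obtain d where "d < R" "sh p d = i" using sh_surj[OF p i] by blast
  then show ?thesis using off_sh[OF p] by metis
qed

lemma off_0: "p < R \<Longrightarrow> i < R \<Longrightarrow> off p i = 0 \<longleftrightarrow> i = p"
  using sh_off[of p i] off_sh[of p 0] R4 by auto
lemma off_1: "p < R \<Longrightarrow> i < R \<Longrightarrow> off p i = 1 \<longleftrightarrow> i = up p"
  using sh_off[of p i] off_sh[of p 1] R4 unfolding up_def by auto
lemma off_2: "p < R \<Longrightarrow> i < R \<Longrightarrow> off p i = 2 \<longleftrightarrow> i = up (up p)"
  using sh_off[of p i] off_sh[of p 2] R4 unfolding up_up_sh by auto

lemma off_sh2: "p < R \<Longrightarrow> i < R \<Longrightarrow> off (sh p 2) i = (if 2 \<le> off p i then off p i - 2 else off p i + R - 2)"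
proof -
  assume p: "p < R" and i: "i < R"
  define k where "k = off p i"
  have ik: "i = sh p k" unfolding k_def using sh_off[OF p i] by simp
  have kR: "k < R" unfolding k_def by simp
  show ?thesis
  proof (cases "2 \<le> k")
    case True
    then have "i = sh (sh p 2) (k - 2)" using ik sh_sh_diff[of 2 k p] by simp
    then have "off (sh p 2) i = k - 2" using off_sh[of "sh p 2" "k-2"] kR by simp
    then show ?thesis using True unfolding k_def by simp
  next
    case False
    have "sh (sh p 2) (k + R - 2) = sh p (k + R)" using sh_sh_diff[of 2 "k + R" p] R4 by simp
    then have "i = sh (sh p 2) (k + R - 2)" using ik sh_addR by simp
    moreover have "k + R - 2 < R" using False R4 by arith
    ultimately have "off (sh p 2) i = k + R - 2" using off_sh[of "sh p 2" "k + R - 2"] by simp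
    then show ?thesis using False unfolding k_def by simp
  qed
qed

definition upd :: "(nat\<times>nat \<Rightarrow> dir) \<Rightarrow> nat \<Rightarrow> nat \<Rightarrow> nat \<Rightarrow> (nat\<times>nat \<Rightarrow> dir)" where
  "upd st j p g = (\<lambda>(i,j'). if i < R \<and> (j' = j \<or> j' = rt j) \<and> off p i \<le> g
      then (if even (off p i) then U else D) else st (i,j'))"

lemma fun_eq_pair: "(\<And>i j. f (i,j) = g (i,j)) \<Longrightarrow> f = g"
  by (rule ext) (metis prod.collapse)

lemma rows_distinct:
  assumes "p < R"
  shows "up p \<noteq> p" "p \<noteq> up p" "up (up p) \<noteq> p" "p \<noteq> up (up p)" "up (up p) \<noteq> up p" "up p \<noteq> up (up p)"
proof -
  have a: "sh p 1 \<noteq> sh p 0" "sh p 2 \<noteq> sh p 0" "sh p 2 \<noteq> sh p 1"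
    using sh_inj[of 1 0 p] sh_inj[of 2 0 p] sh_inj[of 2 1 p] R4 by auto
  show "up p \<noteq> p" "p \<noteq> up p" "up (up p) \<noteq> p" "p \<noteq> up (up p)" "up (up p) \<noteq> up p" "up p \<noteq> up (up p)"
    using a assms unfolding up_up_sh by (auto simp: up_def)
qed

lemma clean_remove:
  assumes "valid st" "clean st j p g"
  shows "reach st (upd st j p g)"
  using assms
proof (induction g arbitrary: p st rule: less_induct)
  case (less g)
  have vs: "valid st" using less.prems by blast
  have j: "j < C" and p: "p < R" and g: "0 < g" "g < R" and sv: "st (p,j) = Rt" "st (sh p g, j) = Rt"
    and fr: "free st j p g" and fr2: "free st (rt j) p g"
    using less.prems unfolding clean_def spair_def by auto
  have rd: "up p \<noteq> p" "p \<noteq> up p" "up (up p) \<noteq> p" "p \<noteq> up (up p)" "up (up p) \<noteq> up p" "up p \<noteq> up (up p)"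
    using rows_distinct[OF p] by auto
  have jr0: "rt j \<noteq> j" using j by simp
  then have jr: "rt j \<noteq> j" "j \<noteq> rt j" by (auto dest: sym)
  have pL: "st (p, rt j) = Lt" using vR[OF vs p j sv(1)] .
  show ?case
  proof (cases "g = 1")
    case True
    have sq: "st (up p, j) = Rt" using sv True unfolding up_def by simp
    have h: "hor st p j" unfolding hor_def using sv pL sq vR[OF vs up_lt j sq] True by simp
    have tw: "tw st (setV st p j)" unfolding tw_def using vs h p j by blast
    have "setV st p j = upd st j p g"
    proof (rule fun_eq_pair)
      fix i j'
      show "setV st p j (i,j') = upd st j p g (i,j')"
      proof (cases "i < R \<and> (j' = j \<or> j' = rt j)")
        case c: True
        consider "i = p" | "i = up p" | "i \<noteq> p \<and> i \<noteq> up p" by blast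
        then show ?thesis
        proof cases
          case 1 then show ?thesis using c off_0[OF p, of p] p rd jr True unfolding setV_def upd_def by auto
        next
          case 2 then show ?thesis using c off_1[OF p, of "up p"] p rd jr True unfolding setV_def upd_def by auto
        next
          case 3
          then have "off p i \<noteq> 0" "off p i \<noteq> 1" using off_0[OF p] off_1[OF p] c by auto
          then have "\<not> off p i \<le> g" using True by simp
          then show ?thesis using 3 c unfolding setV_def upd_def by auto
        qed
      next
        case False
        then show ?thesis unfolding setV_def upd_def using p by auto
      qed
    qed
    then show ?thesis using tw tw_reach by simp
  next
    case False
    then have g2: "g \<ge> 2" using g by simp
    have n1: "\<not> hz st (up p) j" "\<not> hz st (up p) (rt j)"
      using fr fr2 g2 unfolding free_def up_def by auto
    have u1: "st (up p, j) = U"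
    proof -
      have "st (up p, j) \<noteq> D"
      proof
        assume "st (up p, j) = D" then have "st (p,j) = U" using vD'[OF vs p j] by blast
        then show False using sv by simp
      qed
      then show ?thesis using not_hz[OF n1(1)] by blast
    qed
    have u2: "st (up p, rt j) = U"
    proof -
      have "st (up p, rt j) \<noteq> D"
      proof
        assume "st (up p, rt j) = D" then have "st (p, rt j) = U" using vD'[OF vs p rt_lt] by blast
        then show False using pL by simp
      qed
      then show ?thesis using not_hz[OF n1(2)] by blast
    qed
    have d1: "st (up (up p), j) = D" using vU[OF vs up_lt j u1] .
    have d2: "st (up (up p), rt j) = D" using vU[OF vs up_lt rt_lt u2] .
    have g3: "g \<ge> 3"
    proof (rule ccontr)
      assume "\<not> g \<ge> 3" then have "g = 2" using g2 by simp
      then show False using sv(2) d1 up_up_sh by simp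
    qed
    have ver1: "ver st (up p) j" unfolding ver_def using u1 u2 d1 d2 by simp
    define st1 where "st1 = setH st (up p) j"
    have tw1: "tw st st1" unfolding tw_def st1_def using vs ver1 up_lt j by blast
    have vs1: "valid st1" using tw_valid[OF tw1] .
    have hor1: "hor st1 p j" unfolding hor_def st1_def setH_def using sv pL rd jr by simp
    define st2 where "st2 = setV st1 p j"
    have tw2: "tw st1 st2" unfolding tw_def st2_def using vs1 hor1 p j by blast
    have vs2: "valid st2" using tw_valid[OF tw2] .
    have st2_at: "\<And>i j'. st2 (i,j') = (if (j' = j \<or> j' = rt j) \<and> i = p then U
        else if (j' = j \<or> j' = rt j) \<and> i = up p then D
        else if j' = j \<and> i = up (up p) then Rt
        else if j' = rt j \<and> i = up (up p) then Lt else st (i,j'))"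
      unfolding st2_def st1_def setV_def setH_def using rd jr by auto
    have gR: "g - 2 < g" using g3 by simp
    have offs: "\<And>k. 3 \<le> k \<Longrightarrow> k < R \<Longrightarrow> sh p k \<noteq> p \<and> sh p k \<noteq> up p \<and> sh p k \<noteq> up (up p)"
    proof -
      fix k assume k: "3 \<le> k" "k < R"
      have "sh p k \<noteq> sh p 0" "sh p k \<noteq> sh p 1" "sh p k \<noteq> sh p 2"
        using sh_inj[of k 0 p] sh_inj[of k 1 p] sh_inj[of k 2 p] k R4 by auto
      then show "sh p k \<noteq> p \<and> sh p k \<noteq> up p \<and> sh p k \<noteq> up (up p)"
        using p unfolding up_up_sh by (auto simp: up_def)
    qed
    have clean2: "clean st2 j (sh p 2) (g - 2)"
      unfolding clean_def spair_def
    proof (intro conjI)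
      show "j < C" "sh p 2 < R" "0 < g - 2" "g - 2 < R" using j g g3 by auto
      show "st2 (sh p 2, j) = Rt" using st2_at rd jr up_up_sh by simp
      have "sh (sh p 2) (g - 2) = sh p g" using sh_sh_diff[of 2 g p] g3 by simp
      moreover have "sh p g \<noteq> p \<and> sh p g \<noteq> up p \<and> sh p g \<noteq> up (up p)" using offs g g3 by simp
      ultimately show "st2 (sh (sh p 2) (g - 2), j) = Rt" using st2_at sv by simp
      have nohz: "\<And>k jj. jj = j \<or> jj = rt j \<Longrightarrow> 0 < k \<and> k < g - 2 \<Longrightarrow> \<not> hz st2 (sh (sh p 2) k) jj"
      proof -
        fix k jj assume jj: "jj = j \<or> jj = rt j" and k: "0 < k \<and> k < g - 2"
        have e: "sh (sh p 2) k = sh p (k + 2)" by (simp add: sh_sh add.commute)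
        have ne: "sh p (k+2) \<noteq> p \<and> sh p (k+2) \<noteq> up p \<and> sh p (k+2) \<noteq> up (up p)"
        proof -
          have "3 \<le> k + 2" "k + 2 < R" using k g by arith+
          then show ?thesis using offs[of "k+2"] by blast
        qed
        have "0 < k + 2 \<and> k + 2 < g" using k by arith
        then have "\<not> hz st (sh p (k+2)) j" "\<not> hz st (sh p (k+2)) (rt j)" using fr fr2 unfolding free_def by blast+
        then show "\<not> hz st2 (sh (sh p 2) k) jj"
          unfolding e hz_def using st2_at ne jj by auto
      qed
      show "free st2 j (sh p 2) (g - 2)" "free st2 (rt j) (sh p 2) (g - 2)"
        unfolding free_def using nohz by blast+
    qed
    have IH: "reach st2 (upd st2 j (sh p 2) (g - 2))" using less.IH[OF gR vs2 clean2] .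
    have eq: "upd st2 j (sh p 2) (g - 2) = upd st j p g"
    proof (rule fun_eq_pair)
      fix i j'
      show "upd st2 j (sh p 2) (g - 2) (i, j') = upd st j p g (i, j')"
      proof (cases "i < R \<and> (j' = j \<or> j' = rt j)")
        case c: True
        define k where "k = off p i"
        have kR: "k < R" unfolding k_def by simp
        have o2: "off (sh p 2) i = (if 2 \<le> k then k - 2 else k + R - 2)" unfolding k_def using off_sh2 p c by blast
        consider "k = 0" | "k = 1" | "k \<ge> 2 \<and> k \<le> g" | "k > g" by linarith
        then show ?thesis
        proof cases
          case 1
          then have "i = p" using off_0[OF p] c unfolding k_def by blast
          then show ?thesis using c 1 o2 g st2_at unfolding upd_def k_def by auto
        next
          case 2
          then have "i = up p" using off_1[OF p] c unfolding k_def by blast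
          then show ?thesis using c 2 o2 g st2_at rd unfolding upd_def k_def by auto
        next
          case 3
          then show ?thesis using c o2 unfolding upd_def k_def by auto
        next
          case 4
          then have "i = sh p k" unfolding k_def using sh_off[OF p] c by simp
          then have ne: "i \<noteq> p \<and> i \<noteq> up p \<and> i \<noteq> up (up p)" using offs[of k] 4 g3 kR by simp
          have "\<not> off (sh p 2) i \<le> g - 2" using o2 4 g3 by simp
          then show ?thesis using c 4 ne st2_at unfolding upd_def k_def by auto
        qed
      next
        case False
        have "st2 (i,j') = st (i,j')" using st2_at False p by auto
        then show ?thesis using False unfolding upd_def by auto
      qed
    qed
    have "reach st st2" using tw1 tw2 tw_reach reach_trans by blast
    then show ?thesis using IH eq reach_trans by metis
  qed
qed


definition hzset :: "(nat\<times>nat \<Rightarrow> dir) \<Rightarrow> (nat\<times>nat) set" where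
  "hzset st = {v \<in> V. st v = Lt \<or> st v = Rt}"

lemma hzset_upd:
  assumes "clean st j p g"
  shows "hzset (upd st j p g) \<subset> hzset st"
proof
  show "hzset (upd st j p g) \<subseteq> hzset st"
  proof
    fix v assume v: "v \<in> hzset (upd st j p g)"
    obtain i j' where ij: "v = (i,j')" by (cases v)
    show "v \<in> hzset st"
      using v unfolding ij hzset_def upd_def by (auto split: if_splits)
  qed
  have p: "p < R" "j < C" "st (p,j) = Rt" using assms unfolding clean_def spair_def by auto
  have "off p p = 0" using off_0[OF p(1) p(1)] by simp
  then have "upd st j p g (p,j) = U" unfolding upd_def using p by simp
  then have "(p,j) \<notin> hzset (upd st j p g)" unfolding hzset_def by simp
  moreover have "(p,j) \<in> hzset st" unfolding hzset_def using p by simp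
  ultimately show "hzset (upd st j p g) \<noteq> hzset st" by blast
qed

lemma reduce_all:
  "valid st \<Longrightarrow> \<exists>st'. reach st st' \<and> valid st' \<and> (\<forall>v\<in>V. st' v \<noteq> Lt \<and> st' v \<noteq> Rt)"
proof (induction "card (hzset st)" arbitrary: st rule: less_induct)
  case less
  show ?case
  proof (cases "hzset st = {}")
    case True
    then show ?thesis using less.prems reach_refl unfolding hzset_def by blast
  next
    case False
    then obtain v where v: "v \<in> V" "st v = Lt \<or> st v = Rt" unfolding hzset_def by blast
    obtain j p g where c: "clean st j p g" using clean_exists[OF less.prems v] by blast
    have r: "reach st (upd st j p g)" using clean_remove[OF less.prems c] .
    have vs': "valid (upd st j p g)" using reach_valid[OF r less.prems] .
    have "finite (hzset st)" unfolding hzset_def using finite_V by simp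
    then have "card (hzset (upd st j p g)) < card (hzset st)" using hzset_upd[OF c] by (rule psubset_card_mono)
    then obtain st' where "reach (upd st j p g) st'" "valid st'" "\<forall>v\<in>V. st' v \<noteq> Lt \<and> st' v \<noteq> Rt"
      using less.hyps vs' by blast
    then show ?thesis using r reach_trans by blast
  qed
qed

end

context tor begin

definition vstate :: "(nat \<Rightarrow> bool) \<Rightarrow> (nat\<times>nat \<Rightarrow> dir)" where
  "vstate ph = (\<lambda>(i,j). if i < R \<and> j < C then (if even i = ph j then U else D) else U)"

lemma even_up: "even (up i) \<longleftrightarrow> \<not> even i"
  unfolding up_def using sh_even[of i 1] by simp
lemma even_dn: "even (dn i) \<longleftrightarrow> \<not> even i"
proof -
  have "even (dn i) = even (i + (R - 1))" unfolding dn_def using sh_even by blast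
  moreover have "odd (R - 1)" using evenR R4 by simp
  ultimately show ?thesis by simp
qed

lemma vstate_valid: "valid (vstate ph)"
  unfolding valid_def
proof (intro conjI ballI allI impI)
  fix v assume v: "v \<in> V"
  obtain i j where ij: "v = (i,j)" by (cases v)
  show "vstate ph (nb v (vstate ph v)) = opp (vstate ph v)"
    using v even_up[of i] even_dn[of i] unfolding ij vstate_def by auto
next
  fix v assume "v \<notin> V"
  then show "vstate ph v = U" unfolding vstate_def by (cases v) auto
qed

lemma vert_is_vstate:
  assumes vs: "valid st" and nh: "\<forall>v\<in>V. st v \<noteq> Lt \<and> st v \<noteq> Rt"
  shows "st = vstate (\<lambda>j. j < C \<and> st (0,j) = U)"
proof (rule fun_eq_pair)
  fix i j
  show "st (i,j) = vstate (\<lambda>j. j < C \<and> st (0,j) = U) (i,j)"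
  proof (cases "i < R \<and> j < C")
    case False
    then show ?thesis using valid_out[OF vs, of "(i,j)"] unfolding vstate_def by auto
  next
    case True
    have ud: "\<And>i. i < R \<Longrightarrow> st (i,j) = U \<or> st (i,j) = D"
      using nh True dir_cases4 by auto
    have jC: "j < C" using True by simp
    have "ii < R \<longrightarrow> (st (ii,j) = U \<longleftrightarrow> (even ii \<longleftrightarrow> st (0,j) = U))" for ii
    proof (induction ii)
      case 0 then show ?case by simp
    next
      case (Suc i)
      show ?case
      proof
        assume si: "Suc i < R"
        then have ui: "up i = Suc i" unfolding up_def sh_def by simp
        have iR: "i < R" using si by simp
        show "st (Suc i, j) = U \<longleftrightarrow> (even (Suc i) \<longleftrightarrow> st (0,j) = U)"
        proof (cases "st (i,j) = U")
          case True
          then have "st (Suc i, j) = D" using vU[OF vs iR] jC ui by auto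
          then show ?thesis using Suc.IH iR True by auto
        next
          case False
          then have "st (i,j) = D" using ud iR by blast
          have "st (Suc i, j) \<noteq> D"
          proof
            assume "st (Suc i, j) = D"
            then have "st (i,j) = U" using vD'[OF vs iR] jC ui by auto
            then show False using False by simp
          qed
          then have "st (Suc i, j) = U" using ud si by blast
          then show ?thesis using Suc.IH iR False by auto
        qed
      qed
    qed
    then have "st (i,j) = U \<longleftrightarrow> (even i \<longleftrightarrow> st (0,j) = U)" using True by blast
    then show ?thesis using True ud[of i] unfolding vstate_def by auto
  qed
qed

definition flipr :: "(nat \<Rightarrow> bool) \<Rightarrow> (nat \<Rightarrow> bool) \<Rightarrow> bool" where
  "flipr ph ph' \<longleftrightarrow> (\<exists>j<C. ph j = ph (rt j) \<and> ph' = ph(j := \<not> ph j, rt j := \<not> ph (rt j)))"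

lemma flip_reach:
  assumes "flipr ph ph'"
  shows "reach (vstate ph) (vstate ph')"
proof -
  obtain j where j: "j < C" "ph j = ph (rt j)" and ph': "ph' = ph(j := \<not> ph j, rt j := \<not> ph (rt j))"
    using assms unfolding flipr_def by blast
  have jr0: "rt j \<noteq> j" using j by simp
  then have jr: "rt j \<noteq> j" "j \<noteq> rt j" by (auto dest: sym)
  define r0 where "r0 = (if ph j then 0 else 1::nat)"
  have r0: "r0 < R" "even r0 = ph j" unfolding r0_def using R4 by auto
  have rd: "up r0 \<noteq> r0" "r0 \<noteq> up r0" using rows_distinct[OF r0(1)] by auto
  let ?s = "vstate ph"
  have ver0: "ver ?s r0 j" unfolding ver_def vstate_def using r0 j even_up[of r0] by auto
  define st1 where "st1 = setH ?s r0 j"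
  have tw1: "tw ?s st1" unfolding tw_def st1_def using vstate_valid ver0 r0 j by blast
  have vs1: "valid st1" using tw_valid[OF tw1] .
  have st1_at: "\<And>i j'. st1 (i,j') = (if j' = j \<and> (i = r0 \<or> i = up r0) then Rt
      else if j' = rt j \<and> (i = r0 \<or> i = up r0) then Lt else ?s (i,j'))"
    unfolding st1_def setH_def using rd jr by auto
  have shr: "sh (up r0) (R - 1) = r0" using dn_up[OF r0(1)] unfolding dn_def .
  have rows: "\<And>k. 0 < k \<Longrightarrow> k < R - 1 \<Longrightarrow> sh (up r0) k \<noteq> r0 \<and> sh (up r0) k \<noteq> up r0"
  proof -
    fix k assume k: "0 < k" "k < R - 1"
    have "sh (up r0) k = sh r0 (k + 1)" unfolding up_def by (simp add: sh_sh add.commute)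
    moreover have "k + 1 < R" using k by arith
    then have "sh r0 (k+1) \<noteq> sh r0 0" "sh r0 (k+1) \<noteq> sh r0 1"
      using sh_inj[of "k+1" 0 r0] sh_inj[of "k+1" 1 r0] k R4 by auto
    ultimately show "sh (up r0) k \<noteq> r0 \<and> sh (up r0) k \<noteq> up r0" using r0 unfolding up_def by auto
  qed
  have cl: "clean st1 j (up r0) (R - 1)"
    unfolding clean_def spair_def free_def
  proof (intro conjI allI impI)
    show "j < C" "up r0 < R" "0 < R - 1" "R - 1 < R" using j R4 by auto
    show "st1 (up r0, j) = Rt" using st1_at by simp
    show "st1 (sh (up r0) (R - 1), j) = Rt" using st1_at shr by simp
    fix k assume k: "0 < k \<and> k < R - 1"
    show "\<not> hz st1 (sh (up r0) k) j" "\<not> hz st1 (sh (up r0) k) (rt j)"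
      using rows[of k] k st1_at unfolding hz_def vstate_def by (auto split: if_splits)
  qed
  have r2: "reach st1 (upd st1 j (up r0) (R - 1))" using clean_remove[OF vs1 cl] .
  have eq: "upd st1 j (up r0) (R - 1) = vstate ph'"
  proof (rule fun_eq_pair)
    fix i j'
    show "upd st1 j (up r0) (R - 1) (i, j') = vstate ph' (i, j')"
    proof (cases "i < R \<and> (j' = j \<or> j' = rt j)")
      case c: True
      define k where "k = off (up r0) i"
      have ik: "sh (up r0) k = i" unfolding k_def using sh_off c by simp
      have kR: "k \<le> R - 1" unfolding k_def using off_lt[of "up r0" i] by linarith
      have "even i = even (up r0 + k)" using sh_even[of "up r0" k] ik by simp
      then have ev: "even k \<longleftrightarrow> (even i \<longleftrightarrow> \<not> ph j)" using even_up[of r0] r0(2) by auto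
      have "ph' j' = (\<not> ph j)" using c ph' j(2) jr by auto
      then show ?thesis using c ev kR j unfolding upd_def vstate_def k_def by auto
    next
      case False
      have "st1 (i,j') = ?s (i,j')" using st1_at False r0 by auto
      moreover have "ph' j' = ph j' \<or> \<not> i < R" using False ph' by auto
      ultimately show ?thesis using False unfolding upd_def vstate_def by auto
    qed
  qed
  show ?thesis using tw_reach[OF tw1] r2 eq reach_trans by metis
qed

lemma flips_reach: "flipr\<^sup>*\<^sup>* ph ph' \<Longrightarrow> reach (vstate ph) (vstate ph')"
  by (induction rule: rtranclp_induct) (auto intro: reach_refl reach_trans flip_reach)


definition nrm :: "(nat \<Rightarrow> bool) \<Rightarrow> bool" where "nrm ph \<longleftrightarrow> (\<forall>j. C \<le> j \<longrightarrow> \<not> ph j)"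
definition ps :: "(nat \<Rightarrow> bool) \<Rightarrow> nat \<Rightarrow> bool" where "ps ph j \<longleftrightarrow> (ph j \<noteq> odd j)"
definition cnt :: "(nat \<Rightarrow> bool) \<Rightarrow> nat" where "cnt ph = card {j. j < C \<and> ps ph j}"
definition srt :: "(nat \<Rightarrow> bool) \<Rightarrow> bool" where "srt ph \<longleftrightarrow> (\<forall>l. Suc l < C \<longrightarrow> \<not> (ps ph l \<and> \<not> ps ph (Suc l)))"

lemma rt_Suc: "Suc l < C \<Longrightarrow> rt l = Suc l" unfolding rt_def cs_def by simp
lemma rt_last: "rt (C - 1) = 0" unfolding rt_def cs_def using C3 by simp

lemma flipr_sym: "flipr a b \<Longrightarrow> flipr b a"
proof -
  assume "flipr a b"
  then obtain j where j: "j < C" "a j = a (rt j)" and b: "b = a(j := \<not> a j, rt j := \<not> a (rt j))"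
    unfolding flipr_def by blast
  have jr0: "rt j \<noteq> j" using j by simp
  then have jr: "j \<noteq> rt j" by (auto dest: sym)
  have "b j = b (rt j)" using b j jr by auto
  moreover have "a = b(j := \<not> b j, rt j := \<not> b (rt j))" using b jr by (auto intro!: ext)
  ultimately show ?thesis using j unfolding flipr_def by blast
qed

lemma flips_sym: "flipr\<^sup>*\<^sup>* a b \<Longrightarrow> flipr\<^sup>*\<^sup>* b a"
proof (induct rule: rtranclp_induct)
  case base then show ?case by simp
next
  case (step y z)
  then have "flipr z y" using flipr_sym by blast
  then show ?case using step(3) by (rule converse_rtranclp_into_rtranclp)
qed

lemma cnt_le: "cnt ph \<le> C"
proof -
  have "{j. j < C \<and> ps ph j} \<subseteq> {..<C}" by auto
  then show ?thesis unfolding cnt_def by (metis card_lessThan card_mono finite_lessThan)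
qed

lemma sum2:
  assumes "finite A" "a \<in> A" "b \<in> A" "a \<noteq> b" "\<And>x. x \<in> A \<Longrightarrow> x \<noteq> a \<Longrightarrow> x \<noteq> b \<Longrightarrow> f x = g x"
  shows "sum f A + g a + g b = sum g A + f a + (f b :: nat)"
proof -
  have "sum f A = f a + f b + sum f (A - {a} - {b})"
    using assms by (simp add: sum.remove[of A a] sum.remove[of "A - {a}" b])
  moreover have "sum g A = g a + g b + sum g (A - {a} - {b})"
    using assms by (simp add: sum.remove[of A a] sum.remove[of "A - {a}" b])
  moreover have "sum f (A - {a} - {b}) = sum g (A - {a} - {b})" using assms(5) by (intro sum.cong) auto
  ultimately show ?thesis by simp
qed

definition mu :: "(nat \<Rightarrow> bool) \<Rightarrow> nat" where
  "mu ph = (\<Sum>j<C. if ps ph j then C - j else 0)"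

lemma bubble:
  "nrm ph \<Longrightarrow> \<exists>ph'. flipr\<^sup>*\<^sup>* ph ph' \<and> nrm ph' \<and> srt ph' \<and> cnt ph' = cnt ph"
proof (induction "mu ph" arbitrary: ph rule: less_induct)
  case less
  show ?case
  proof (cases "srt ph")
    case True then show ?thesis using less.prems by blast
  next
    case False
    then obtain l where l: "Suc l < C" "ps ph l" "\<not> ps ph (Suc l)" unfolding srt_def by blast
    define ph1 where "ph1 = ph(l := \<not> ph l, Suc l := \<not> ph (Suc l))"
    have eqv: "ph l = ph (Suc l)" using l unfolding ps_def by auto
    have fl: "flipr ph ph1" unfolding flipr_def ph1_def using l eqv rt_Suc[OF l(1)]
      by (intro exI[of _ l]) auto
    have n1: "nrm ph1" using less.prems l unfolding nrm_def ph1_def by auto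
    have ps1: "\<And>j. ps ph1 j = (if j = l then False else if j = Suc l then True else ps ph j)"
      using l unfolding ph1_def ps_def by auto
    have T1: "{j. j < C \<and> ps ph1 j} = insert (Suc l) ({j. j < C \<and> ps ph j} - {l})"
      using ps1 l by auto
    have "cnt ph1 = cnt ph"
    proof -
      have fin: "finite {j. j < C \<and> ps ph j}" by simp
      have "l \<in> {j. j < C \<and> ps ph j}" "Suc l \<notin> {j. j < C \<and> ps ph j}" using l by auto
      moreover have "card {j. j < C \<and> ps ph j} > 0"
        using fin \<open>l \<in> {j. j < C \<and> ps ph j}\<close> card_gt_0_iff by blast
      ultimately show ?thesis unfolding cnt_def T1 using fin by (simp add: card_Diff_singleton)
    qed
    moreover have "mu ph1 < mu ph"
    proof -
      let ?f = "\<lambda>j. if ps ph j then C - j else 0"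
      let ?g = "\<lambda>j. if ps ph1 j then C - j else 0"
      have "sum ?f {..<C} + ?g l + ?g (Suc l) = sum ?g {..<C} + ?f l + ?f (Suc l)"
        by (rule sum2) (use l ps1 in auto)
      then have "mu ph + (C - Suc l) = mu ph1 + (C - l)" unfolding mu_def using ps1 l by simp
      then show ?thesis using l by simp
    qed
    ultimately obtain ph' where "flipr\<^sup>*\<^sup>* ph1 ph'" "nrm ph'" "srt ph'" "cnt ph' = cnt ph"
      using less.hyps[of ph1] n1 by auto
    then show ?thesis using fl by (meson converse_rtranclp_into_rtranclp)
  qed
qed

lemma srt_char:
  assumes "srt ph" "j < C"
  shows "ps ph j \<longleftrightarrow> C - cnt ph \<le> j"
proof -
  define T where "T = {j. j < C \<and> ps ph j}"
  have up: "\<And>a b. a \<in> T \<Longrightarrow> a \<le> b \<Longrightarrow> b < C \<Longrightarrow> b \<in> T"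
  proof -
    fix a b assume a: "a \<in> T" and ab: "a \<le> b" and b: "b < C"
    show "b \<in> T" using ab b
    proof (induction b rule: dec_induct)
      case base then show ?case using a by simp
    next
      case (step k)
      have sk: "Suc k < C" using step.prems .
      then have "k \<in> T" using step.IH by simp
      then have pk: "ps ph k" unfolding T_def by simp
      have "\<not> (ps ph k \<and> \<not> ps ph (Suc k))" using assms(1) sk unfolding srt_def by blast
      then show ?case using pk sk unfolding T_def by simp
    qed
  qed
  define t where "t = (if T = {} then C else Min T)"
  have finT: "finite T" unfolding T_def by simp
  have Teq: "T = {t..<C}"
  proof
    show "T \<subseteq> {t..<C}"
    proof
      fix x assume "x \<in> T"
      then have "T \<noteq> {}" by blast
      then have "t = Min T" unfolding t_def by simp
      then have "t \<le> x" using finT \<open>x \<in> T\<close> by simp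
      then show "x \<in> {t..<C}" using \<open>x \<in> T\<close> unfolding T_def by auto
    qed
    show "{t..<C} \<subseteq> T"
    proof
      fix x assume x: "x \<in> {t..<C}"
      have "T \<noteq> {}"
      proof
        assume "T = {}" then have "t = C" unfolding t_def by simp
        then show False using x by simp
      qed
      then have "t \<in> T" unfolding t_def using finT by simp
      then show "x \<in> T" using up[of t x] x by simp
    qed
  qed
  have tC: "t \<le> C"
  proof (cases "T = {}")
    case True then show ?thesis unfolding t_def by simp
  next
    case False
    then have "Min T \<in> T" using finT by simp
    then have "Min T < C" unfolding T_def by simp
    then show ?thesis unfolding t_def using False by simp
  qed
  have "cnt ph = C - t" unfolding cnt_def T_def[symmetric] Teq by simp
  then have "t = C - cnt ph" using tC by simp
  have "ps ph j \<longleftrightarrow> j \<in> T" using assms(2) unfolding T_def by simp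
  also have "\<dots> \<longleftrightarrow> t \<le> j" using Teq assms(2) by simp
  finally show ?thesis using \<open>t = C - cnt ph\<close> by simp
qed

lemma nrm_eq:
  assumes "nrm a" "nrm b" "\<And>j. j < C \<Longrightarrow> ps a j = ps b j"
  shows "a = b"
proof
  fix x show "a x = b x"
  proof (cases "x < C")
    case True then show ?thesis using assms(3)[of x] unfolding ps_def by auto
  next
    case False then show ?thesis using assms(1,2) unfolding nrm_def by auto
  qed
qed

lemma same_cnt:
  assumes "nrm a" "nrm b" "cnt a = cnt b"
  shows "flipr\<^sup>*\<^sup>* a b"
proof -
  obtain a' where a': "flipr\<^sup>*\<^sup>* a a'" "nrm a'" "srt a'" "cnt a' = cnt a" using bubble[OF assms(1)] by blast
  obtain b' where b': "flipr\<^sup>*\<^sup>* b b'" "nrm b'" "srt b'" "cnt b' = cnt b" using bubble[OF assms(2)] by blast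
  have "a' = b'" using nrm_eq[OF a'(2) b'(2)] srt_char[OF a'(3)] srt_char[OF b'(3)] a'(4) b'(4) assms(3) by simp
  then show ?thesis using a'(1) flips_sym[OF b'(1)] by simp
qed


lemma card_part: "card {j. j < C \<and> P j} + card {j. j < C \<and> \<not> P j} = C"
proof -
  have "{..<C} = {j. j < C \<and> P j} \<union> {j. j < C \<and> \<not> P j}" by auto
  then have "card {..<C} = card {j. j < C \<and> P j} + card {j. j < C \<and> \<not> P j}"
    by (simp add: card_Un_disjoint disjoint_iff)
  then show ?thesis by simp
qed

lemma oddC1: "even (C - 1)" using oddC C3 by simp

lemma wrap_down:
  assumes n: "nrm x" and p0: "ps x 0" and p1: "ps x (C - 1)"
  shows "\<exists>x'. flipr x x' \<and> nrm x' \<and> cnt x' + 2 = cnt x"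
proof -
  define x' where "x' = x(C - 1 := \<not> x (C - 1), 0 := \<not> x 0)"
  have c0: "C - 1 \<noteq> 0" using C3 by simp
  have eq: "x (C - 1) = x 0" using p0 p1 oddC1 unfolding ps_def by auto
  have "flipr x x'" unfolding flipr_def x'_def using C3 eq rt_last by (intro exI[of _ "C - 1"]) auto
  moreover have "nrm x'" using n c0 unfolding nrm_def x'_def by auto
  moreover have "cnt x' + 2 = cnt x"
  proof -
    define T where "T = {j. j < C \<and> ps x j}"
    have a0: "x 0" using p0 unfolding ps_def by simp
    have a1: "x (C - 1)" using p1 oddC1 unfolding ps_def by simp
    have T': "{j. j < C \<and> ps x' j} = T - {0} - {C - 1}" unfolding T_def x'_def ps_def using c0 a0 a1 oddC1 by auto
    have "0 \<in> T" "C - 1 \<in> T - {0}" unfolding T_def using p0 p1 c0 C3 by auto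
    moreover have "finite T" unfolding T_def by simp
    ultimately have "card (T - {0} - {C - 1}) + 2 = card T"
    proof -
      assume a: "0 \<in> T" "C - 1 \<in> T - {0}" "finite T"
      have "card (T - {0}) = Suc (card (T - {0} - {C - 1}))" using card_Suc_Diff1[of "T - {0}" "C - 1"] a by simp
      moreover have "card T = Suc (card (T - {0}))" using card_Suc_Diff1[of T 0] a by simp
      ultimately show ?thesis by simp
    qed
    then show ?thesis unfolding cnt_def T' T_def .
  qed
  ultimately show ?thesis by blast
qed

lemma wrap_up:
  assumes n: "nrm x" and p0: "\<not> ps x 0" and p1: "\<not> ps x (C - 1)"
  shows "\<exists>x'. flipr x x' \<and> nrm x' \<and> cnt x' = cnt x + 2"
proof -
  define x' where "x' = x(C - 1 := \<not> x (C - 1), 0 := \<not> x 0)"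
  have c0: "C - 1 \<noteq> 0" using C3 by simp
  have eq: "x (C - 1) = x 0" using p0 p1 oddC1 unfolding ps_def by auto
  have "flipr x x'" unfolding flipr_def x'_def using C3 eq rt_last by (intro exI[of _ "C - 1"]) auto
  moreover have "nrm x'" using n c0 unfolding nrm_def x'_def by auto
  moreover have "cnt x' = cnt x + 2"
  proof -
    define T where "T = {j. j < C \<and> ps x j}"
    have a0: "\<not> x 0" using p0 unfolding ps_def by simp
    have a1: "\<not> x (C - 1)" using p1 oddC1 unfolding ps_def by simp
    have T': "{j. j < C \<and> ps x' j} = insert 0 (insert (C - 1) T)" unfolding T_def x'_def ps_def
      using c0 C3 a0 a1 oddC1 by auto
    have "0 \<notin> insert (C - 1) T" "C - 1 \<notin> T" unfolding T_def using p0 p1 c0 by auto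
    moreover have "finite T" unfolding T_def by simp
    ultimately have "card (insert 0 (insert (C - 1) T)) = card T + 2" by simp
    then show ?thesis unfolding cnt_def T' T_def .
  qed
  ultimately show ?thesis by blast
qed

definition xid :: "nat \<Rightarrow> nat \<Rightarrow> bool" where
  "xid c = (\<lambda>j. j < C \<and> ((j = 0 \<or> C - c + 1 \<le> j) \<noteq> odd j))"
definition xiu :: "nat \<Rightarrow> nat \<Rightarrow> bool" where
  "xiu c = (\<lambda>j. j < C \<and> ((1 \<le> j \<and> j \<le> c) \<noteq> odd j))"

lemma xid_props:
  assumes "2 \<le> c" "c \<le> C"
  shows "nrm (xid c)" "ps (xid c) 0" "ps (xid c) (C - 1)" "cnt (xid c) = c"
proof -
  show "nrm (xid c)" unfolding nrm_def xid_def by simp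
  show "ps (xid c) 0" unfolding ps_def xid_def using C3 by simp
  show "ps (xid c) (C - 1)" unfolding ps_def xid_def using C3 assms by auto
  have "{j. j < C \<and> ps (xid c) j} = insert 0 {C - c + 1..<C}"
    unfolding ps_def xid_def using assms by auto
  moreover have "0 \<notin> {C - c + 1..<C}" by simp
  ultimately show "cnt (xid c) = c" unfolding cnt_def using assms by simp
qed

lemma xiu_props:
  assumes "c + 2 \<le> C"
  shows "nrm (xiu c)" "\<not> ps (xiu c) 0" "\<not> ps (xiu c) (C - 1)" "cnt (xiu c) = c"
proof -
  show "nrm (xiu c)" unfolding nrm_def xiu_def by simp
  show "\<not> ps (xiu c) 0" unfolding ps_def xiu_def using C3 by simp
  show "\<not> ps (xiu c) (C - 1)" unfolding ps_def xiu_def using C3 assms by auto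
  have "{j. j < C \<and> ps (xiu c) j} = {1..c}"
    unfolding ps_def xiu_def using assms by auto
  then show "cnt (xiu c) = c" unfolding cnt_def by simp
qed

lemma ev_gap1: "(t::nat) < c \<Longrightarrow> even (c + t) \<Longrightarrow> t + 2 \<le> c" by presburger
lemma ev_s1: "(a::nat) + 2 = b \<Longrightarrow> even (b + t) \<Longrightarrow> even (a + t)" by presburger
lemma ev_s2: "(a::nat) = b + 2 \<Longrightarrow> even (b + t) \<Longrightarrow> even (a + t)" by presburger
lemma ev_gap2: "(c::nat) < t \<Longrightarrow> even (c + t) \<Longrightarrow> c + 2 \<le> t" by presburger

lemma adjust:
  assumes "nrm ph" "t \<le> C" "even (cnt ph + t)"
  shows "\<exists>ph'. flipr\<^sup>*\<^sup>* ph ph' \<and> nrm ph' \<and> cnt ph' = t"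
  using assms
proof (induction "if t \<le> cnt ph then cnt ph - t else t - cnt ph" arbitrary: ph rule: less_induct)
  case less
  consider "cnt ph = t" | "cnt ph > t" | "cnt ph < t" by linarith
  then show ?case
  proof cases
    case 1 then show ?thesis using less.prems by blast
  next
    case 2
    then have c2: "cnt ph \<ge> t + 2" using less.prems(3) ev_gap1 by blast
    let ?c = "cnt ph"
    have cC: "?c \<le> C" by (rule cnt_le)
    note xp = xid_props[of ?c]
    have r1: "flipr\<^sup>*\<^sup>* ph (xid ?c)" using same_cnt[OF less.prems(1) xp(1)] xp(4) c2 cC by simp
    obtain x' where x': "flipr (xid ?c) x'" "nrm x'" "cnt x' + 2 = ?c"
      using wrap_down[of "xid ?c"] xp c2 cC by auto
    have "(if t \<le> cnt x' then cnt x' - t else t - cnt x') < (if t \<le> ?c then ?c - t else t - ?c)"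
      using x'(3) c2 by auto
    moreover have "even (cnt x' + t)" using ev_s1[OF x'(3) less.prems(3)] .
    ultimately obtain ph' where "flipr\<^sup>*\<^sup>* x' ph'" "nrm ph'" "cnt ph' = t"
      using less.hyps[of x'] x'(2) less.prems(2) by blast
    moreover have "flipr\<^sup>*\<^sup>* ph x'" using r1 x'(1) by (metis rtranclp.rtrancl_into_rtrancl)
    ultimately show ?thesis using rtranclp_trans[of flipr ph x'] by blast
  next
    case 3
    then have c2: "cnt ph + 2 \<le> t" using less.prems(3) ev_gap2 by blast
    let ?c = "cnt ph"
    note xp = xiu_props[of ?c]
    have cC: "?c + 2 \<le> C" using c2 less.prems(2) by simp
    have r1: "flipr\<^sup>*\<^sup>* ph (xiu ?c)" using same_cnt[OF less.prems(1) xp(1)[OF cC]] xp(4)[OF cC] by simp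
    obtain x' where x': "flipr (xiu ?c) x'" "nrm x'" "cnt x' = ?c + 2"
      using wrap_up[of "xiu ?c"] xp cC by auto
    have "(if t \<le> cnt x' then cnt x' - t else t - cnt x') < (if t \<le> ?c then ?c - t else t - ?c)"
      using x'(3) c2 by auto
    moreover have "even (cnt x' + t)" using ev_s2[OF x'(3) less.prems(3)] .
    ultimately obtain ph' where "flipr\<^sup>*\<^sup>* x' ph'" "nrm ph'" "cnt ph' = t"
      using less.hyps[of x'] x'(2) less.prems(2) by blast
    moreover have "flipr\<^sup>*\<^sup>* ph x'" using r1 x'(1) by (metis rtranclp.rtrancl_into_rtrancl)
    ultimately show ?thesis using rtranclp_trans[of flipr ph x'] by blast
  qed
qed

lemma ev_or: "odd ((a::nat) + b) \<Longrightarrow> even (c + b) \<or> even (c + a)" by presburger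

lemma phase_const:
  assumes "nrm ph"
  shows "\<exists>ph'. flipr\<^sup>*\<^sup>* ph ph' \<and> (ph' = (\<lambda>j. j < C) \<or> ph' = (\<lambda>j. False))"
proof -
  let ?t1 = "\<lambda>j::nat. j < C" and ?t0 = "\<lambda>j::nat. False"
  have n1: "nrm ?t1" "nrm ?t0" unfolding nrm_def by auto
  have "{j. j < C \<and> ps ?t1 j} = {j. j < C \<and> \<not> odd j}" unfolding ps_def by auto
  then have c1: "cnt ?t1 = card {j. j < C \<and> \<not> odd j}" unfolding cnt_def by simp
  have c0: "cnt ?t0 = card {j. j < C \<and> odd j}" unfolding cnt_def ps_def by simp
  have "cnt ?t0 + cnt ?t1 = C" using card_part[of odd] c0 c1 by simp
  then have "odd (cnt ?t0 + cnt ?t1)" using oddC by simp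
  then have "even (cnt ph + cnt ?t1) \<or> even (cnt ph + cnt ?t0)" by (rule ev_or)
  then show ?thesis
  proof
    assume e: "even (cnt ph + cnt ?t1)"
    obtain p' where p': "flipr\<^sup>*\<^sup>* ph p'" "nrm p'" "cnt p' = cnt ?t1"
      using adjust[OF assms cnt_le e] by blast
    then have "flipr\<^sup>*\<^sup>* p' ?t1" using same_cnt[OF p'(2) n1(1)] by simp
    then have "flipr\<^sup>*\<^sup>* ph ?t1" using p'(1) by (metis rtranclp_trans)
    then show ?thesis by blast
  next
    assume e: "even (cnt ph + cnt ?t0)"
    obtain p' where p': "flipr\<^sup>*\<^sup>* ph p'" "nrm p'" "cnt p' = cnt ?t0"
      using adjust[OF assms cnt_le e] by blast
    then have "flipr\<^sup>*\<^sup>* p' ?t0" using same_cnt[OF p'(2) n1(2)] by simp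
    then have "flipr\<^sup>*\<^sup>* ph ?t0" using p'(1) by (metis rtranclp_trans)
    then show ?thesis by blast
  qed
qed

end

context tor begin

lemma connect:
  assumes vs: "valid st"
  shows "reach st (vstate (\<lambda>j. j < C)) \<or> reach st (vstate (\<lambda>j. False))"
proof -
  obtain st' where st': "reach st st'" "valid st'" "\<forall>v\<in>V. st' v \<noteq> Lt \<and> st' v \<noteq> Rt"
    using reduce_all[OF vs] by blast
  define ph where "ph = (\<lambda>j. j < C \<and> st' (0,j) = U)"
  have e: "st' = vstate ph" unfolding ph_def using vert_is_vstate[OF st'(2,3)] .
  have "nrm ph" unfolding nrm_def ph_def by simp
  then obtain ph' where ph': "flipr\<^sup>*\<^sup>* ph ph'" "ph' = (\<lambda>j. j < C) \<or> ph' = (\<lambda>j. False)"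
    using phase_const by blast
  have "reach st (vstate ph')" using st'(1) e flips_reach[OF ph'(1)] reach_trans by metis
  then show ?thesis using ph'(2) by auto
qed

definition sig :: "nat \<times> nat \<Rightarrow> nat \<times> nat" where "sig v = (up (fst v), snd v)"
definition tau :: "nat \<times> nat \<Rightarrow> nat \<times> nat" where "tau v = (dn (fst v), snd v)"

lemma sig_nb: "v \<in> V \<Longrightarrow> sig (nb v d) = nb (sig v) d"
  by (cases v; cases d) (auto simp: sig_def)
lemma tau_nb: "v \<in> V \<Longrightarrow> tau (nb v d) = nb (tau v) d"
  by (cases v; cases d) (auto simp: tau_def)

lemma sig_V: "v \<in> V \<Longrightarrow> sig v \<in> V" by (cases v) (auto simp: sig_def)
lemma tau_V: "v \<in> V \<Longrightarrow> tau v \<in> V" by (cases v) (auto simp: tau_def)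
lemma tau_sig: "v \<in> V \<Longrightarrow> tau (sig v) = v" by (cases v) (auto simp: sig_def tau_def)
lemma sig_tau: "v \<in> V \<Longrightarrow> sig (tau v) = v" by (cases v) (auto simp: sig_def tau_def)

lemma sig_E: "e \<in> E \<Longrightarrow> sig ` e \<in> E"
proof -
  assume "e \<in> E"
  then obtain v d where v: "v \<in> V" "e = {v, nb v d}" using E_form by blast
  then have "sig ` e = {sig v, nb (sig v) d}" using sig_nb by simp
  then show ?thesis using edge_E sig_V v by simp
qed
lemma tau_E: "e \<in> E \<Longrightarrow> tau ` e \<in> E"
proof -
  assume "e \<in> E"
  then obtain v d where v: "v \<in> V" "e = {v, nb v d}" using E_form by blast
  then have "tau ` e = {tau v, nb (tau v) d}" using tau_nb by simp
  then show ?thesis using edge_E tau_V v by simp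
qed

lemma img_mof: "img sig (mof st) = mof (\<lambda>w. st (tau w))"
proof
  show "img sig (mof st) \<subseteq> mof (\<lambda>w. st (tau w))"
  proof
    fix e assume "e \<in> img sig (mof st)"
    then obtain v where v: "v \<in> V" "e = sig ` {v, nb v (st v)}" unfolding img_def mof_def by blast
    then have "e = {sig v, nb (sig v) (st (tau (sig v)))}" using sig_nb tau_sig by simp
    then show "e \<in> mof (\<lambda>w. st (tau w))" using mofI[OF sig_V[OF v(1)]] by simp
  qed
  show "mof (\<lambda>w. st (tau w)) \<subseteq> img sig (mof st)"
  proof
    fix e assume "e \<in> mof (\<lambda>w. st (tau w))"
    then obtain w where w: "w \<in> V" "e = {w, nb w (st (tau w))}" unfolding mof_def by blast
    have "sig ` {tau w, nb (tau w) (st (tau w))} = {w, nb w (st (tau w))}"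
      using sig_nb[OF tau_V[OF w(1)]] sig_tau[OF w(1)] by simp
    moreover have "{tau w, nb (tau w) (st (tau w))} \<in> mof st" using mofI[OF tau_V[OF w(1)]] .
    ultimately show "e \<in> img sig (mof st)" unfolding img_def using w by blast
  qed
qed

lemma mof_cong: "(\<And>v. v \<in> V \<Longrightarrow> s1 v = s2 v) \<Longrightarrow> mof s1 = mof s2"
  unfolding mof_def by (metis (no_types, lifting))

lemma F_img: "valid st \<Longrightarrow> F (\<lambda>w. st (tau w)) \<le> F st"
proof -
  assume vs: "valid st"
  have "forcing_number V E (img sig (mof st)) \<le> forcing_number V E (mof st)"
    by (rule img_fn[OF valid_pm[OF vs] EV_tor, where s=sig and t=tau]) (auto simp: sig_V tau_V tau_sig sig_tau sig_E tau_E)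
  then show ?thesis unfolding F_def img_mof .
qed

abbreviation "h0 \<equiv> vstate (\<lambda>j. j < C)"
abbreviation "h1 \<equiv> vstate (\<lambda>j. False)"

lemma F_h: "F h0 = F h1"
proof -
  have a: "mof (\<lambda>w. h0 (tau w)) = mof h1"
    by (rule mof_cong) (auto simp: tau_def vstate_def even_dn)
  have b: "mof (\<lambda>w. h1 (tau w)) = mof h0"
    by (rule mof_cong) (auto simp: tau_def vstate_def even_dn)
  have "F h1 \<le> F h0" using F_img[OF vstate_valid, of "\<lambda>j. j < C"] a unfolding F_def by simp
  moreover have "F h0 \<le> F h1" using F_img[OF vstate_valid, of "\<lambda>j. False"] b unfolding F_def by simp
  ultimately show ?thesis by simp
qed

lemma main: "continuous_set (forcing_spectrum V E)"
  unfolding continuous_set_def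
proof (intro ballI allI impI)
  fix x y k assume x: "x \<in> forcing_spectrum V E" and y: "y \<in> forcing_spectrum V E" and k: "x \<le> k \<and> k \<le> y"
  obtain M1 where M1: "perfect_matching V E M1" "x = forcing_number V E M1"
    using x unfolding forcing_spectrum_def by blast
  obtain M2 where M2: "perfect_matching V E M2" "y = forcing_number V E M2"
    using y unfolding forcing_spectrum_def by blast
  obtain s1 where s1: "valid s1" "mof s1 = M1" using pm_state[OF M1(1)] by blast
  obtain s2 where s2: "valid s2" "mof s2 = M2" using pm_state[OF M2(1)] by blast
  have Fs1: "F s1 = x" using s1 M1 unfolding F_def by simp
  have Fs2: "F s2 = y" using s2 M2 unfolding F_def by simp
  have "\<exists>a. reach s1 a \<and> F a = F h0" using connect[OF s1(1)] F_h by auto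
  then obtain a where a: "reach s1 a" "F a = F h0" by blast
  have "\<exists>b. reach s2 b \<and> F b = F h0 \<and> valid b" using connect[OF s2(1)] F_h vstate_valid by auto
  then obtain b where b: "reach s2 b" "F b = F h0" "valid b" by blast
  have inspec: "\<And>u. valid u \<Longrightarrow> F u \<in> forcing_spectrum V E"
    unfolding forcing_spectrum_def F_def using valid_pm by blast
  show "k \<in> forcing_spectrum V E"
  proof (cases "k \<le> F h0")
    case True
    then obtain u where "reach s1 u" "F u = k" using reach_ivt[OF a(1), of k] a(2) Fs1 k by auto
    then show ?thesis using inspec reach_valid s1(1) by metis
  next
    case False
    have "reach b s2" using reach_sym[OF b(1)] .
    then obtain u where "reach b u" "F u = k" using reach_ivt[of b s2 k] b(2) Fs2 k False by auto
    then show ?thesis using inspec reach_valid b(3) by metis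
  qed
qed

end

theorem corollary5p3:
  fixes n m :: nat
  assumes "n \<ge> 1" and "m \<ge> 2"
  shows "continuous_set (forcing_spectrum (torus_V n m) (torus_E n m))"
proof -
  interpret tor n m using assms by unfold_locales
  show ?thesis by (rule main)
qed


end
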